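(* Let $\varepsilon>6$ be a constant. The runtime of the sig-cGA with parameter $\varepsilon$ on $\mathrm{DLB}:\{0,1\}^n\to\mathbb{R}$ is $O(n\log n)$ with probability at least $1-O(n^{2-\varepsilon/3}\log^2 n)$.
   Context: Let $n$ be an even positive integer. For $x\in\{0,1\}^n$ consider the blocks $(x_{2\ell+1},x_{2\ell+2})$, $\ell=0,\dots,\frac n2-1$. If $x\neq(1,\dots,1)$, let $m$ be the smallest $\ell$ with $x_{2\ell+1}\neq 1$ or $x_{2\ell+2}\neq 1$, and define $\mathrm{DLB}(x)=2m+1$ if $x_{2m+1}+x_{2m+2}=0$ and $\mathrm{DLB}(x)=2m$ if $x_{2m+1}+x_{2m+2}=1$; set $\mathrm{DLB}(1,\dots,1)=n$. Significance function: for $\varepsilon,\mu>0$ let $s(\varepsilon,\mu)=\varepsilon\max\{\sqrt{\mu\log n},\log n\}$. For a bit string $H\in\{0,1\}^*$, $H[k]$ denotes the string of its last $k$ bits and $\|H[k]\|_0$, $\|H[k]\|_1$ the numbers of zeros and ones in it. For $p\in\{\frac1n,\frac12,1-\frac1n\}$, $\mathrm{sig}_\varepsilon(p,H)=\textsc{up}$ if $p\in\{\frac1n,\frac12\}$ and there is $m\in\mathbb{N}$ with $\|H[2^m]\|_1\ge 2^m p+s(\varepsilon,2^m p)$; $=\textsc{down}$ if $p\in\{\frac12,1-\frac1n\}$ and there is $m\in\mathbb{N}$ with $\|H[2^m]\|_0\ge 2^m(1-p)+s(\varepsilon,2^m(1-p))$; and $=\textsc{stay}$ otherwise. The sig-cGA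 with parameter $\varepsilon$ maximizing $f$: initially $\tau^{(0)}_i=\frac12$ and $H_i=\emptyset$ (empty history) for all $i\in[1..n]$. In iteration $t$, sample two individuals $x,y$ independently, each bit $j$ being $1$ independently with probability $\tau^{(t)}_j$; evaluate both; let the winner $z$ be the one with larger $f$-value (chosen uniformly at random in case of a tie). For each $i$: append $z_i$ to $H_i$; if $\mathrm{sig}_\varepsilon(\tau^{(t)}_i,H_i)=\textsc{up}$ set $\tau^{(t+1)}_i=1-\frac1n$, if it is $\textsc{down}$ set $\tau^{(t+1)}_i=\frac1n$, otherwise $\tau^{(t+1)}_i=\tau^{(t)}_i$; if $\tau^{(t+1)}_i\ne\tau^{(t)}_i$, reset $H_i=\emptyset$. The runtime is the number of fitness evaluations until the optimum $(1,\dots,1)$ is sampled for the first time. *)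

theory Defs
  imports "HOL-Probability.Probability"
begin

text \<open>Bit strings of length n are bool lists; list position j (0-based) is bit x_(j+1).
  True = 1, False = 0.\<close>

definition all_ones :: "nat \<Rightarrow> bool list" where
  "all_ones n = replicate n True"

definition DLB :: "nat \<Rightarrow> bool list \<Rightarrow> nat" where
  "DLB n x = (if x = all_ones n then n else
     (let m = (LEAST l. \<not> (x ! (2*l) \<and> x ! (2*l+1))) in
      if \<not> x ! (2*m) \<and> \<not> x ! (2*m+1) then 2*m+1 else 2*m))"

definition sfun :: "real \<Rightarrow> nat \<Rightarrow> real \<Rightarrow> real" where
  "sfun \<epsilon> n \<mu> = \<epsilon> * max (sqrt (\<mu> * ln (real n))) (ln (real n))"

definition ones :: "bool list \<Rightarrow> nat" where "ones H = length (filter id H)"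
definition zeros :: "bool list \<Rightarrow> nat" where "zeros H = length (filter Not H)"

text \<open>Last k bits of a history (most recent bit is the last list element).\<close>
definition lastk :: "nat \<Rightarrow> bool list \<Rightarrow> bool list" where
  "lastk k H = drop (length H - k) H"

datatype sigval = Up | Down | Stay

definition sig :: "real \<Rightarrow> nat \<Rightarrow> real \<Rightarrow> bool list \<Rightarrow> sigval" where
  "sig \<epsilon> n p H =
    (if (p = 1 / real n \<or> p = 1/2) \<and>
        (\<exists>m::nat. 2^m \<le> length H \<and>
            real (ones (lastk (2^m) H)) \<ge> 2^m * p + sfun \<epsilon> n (2^m * p))
     then Up
     else if (p = 1/2 \<or> p = 1 - 1 / real n) \<and>
        (\<exists>m::nat. 2^m \<le> length H \<and>
            real (zeros (lastk (2^m) H)) \<ge> 2^m * (1 - p) + sfun \<epsilon> n (2^m * (1 - p)))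
     then Down
     else Stay)"

fun sample_bits :: "(nat \<Rightarrow> real) \<Rightarrow> nat list \<Rightarrow> bool list pmf" where
  "sample_bits tau [] = return_pmf []"
| "sample_bits tau (i # is) =
     bind_pmf (bernoulli_pmf (tau i)) (\<lambda>b.
     bind_pmf (sample_bits tau is) (\<lambda>bs. return_pmf (b # bs)))"

definition sample_ind :: "nat \<Rightarrow> (nat \<Rightarrow> real) \<Rightarrow> bool list pmf" where
  "sample_ind n tau = sample_bits tau [0..<n]"

text \<open>State: frequency vector, histories, first evaluation count at which the optimum
  was sampled (if any), and number of completed iterations.\<close>
type_synonym state = "(nat \<Rightarrow> real) \<times> (nat \<Rightarrow> bool list) \<times> nat option \<times> nat"

definition tau_of :: "state \<Rightarrow> nat \<Rightarrow> real" where "tau_of s = fst s"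
definition hist_of :: "state \<Rightarrow> nat \<Rightarrow> bool list" where "hist_of s = fst (snd s)"
definition found_of :: "state \<Rightarrow> nat option" where "found_of s = fst (snd (snd s))"
definition iter_of :: "state \<Rightarrow> nat" where "iter_of s = snd (snd (snd s))"

definition init_state :: state where
  "init_state = ((\<lambda>i. 1/2), (\<lambda>i. []), None, 0)"

definition winner :: "nat \<Rightarrow> bool list \<Rightarrow> bool list \<Rightarrow> bool list pmf" where
  "winner n x y =
    (if DLB n x > DLB n y then return_pmf x
     else if DLB n y > DLB n x then return_pmf y
     else bind_pmf (bernoulli_pmf (1/2)) (\<lambda>c. return_pmf (if c then x else y)))"

definition new_tau :: "real \<Rightarrow> nat \<Rightarrow> real \<Rightarrow> bool list \<Rightarrow> real" where
  "new_tau \<epsilon> n p H = (case sig \<epsilon> n p H of Up \<Rightarrow> 1 - 1 / real n | Down \<Rightarrow> 1 / real n | Stay \<Rightarrow> p)"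

text \<open>One iteration t of the sig-cGA: x is evaluation 2t+1, y is evaluation 2t+2.\<close>
definition sig_cga_step :: "real \<Rightarrow> nat \<Rightarrow> state \<Rightarrow> state pmf" where
  "sig_cga_step \<epsilon> n s =
    bind_pmf (sample_ind n (tau_of s)) (\<lambda>x.
    bind_pmf (sample_ind n (tau_of s)) (\<lambda>y.
    bind_pmf (winner n x y) (\<lambda>z.
      let t = iter_of s;
          found' = (case found_of s of Some r \<Rightarrow> Some r
                    | None \<Rightarrow> if x = all_ones n then Some (2*t+1)
                              else if y = all_ones n then Some (2*t+2) else None);
          H' = (\<lambda>i. hist_of s i @ [z ! i]);
          tau' = (\<lambda>i. new_tau \<epsilon> n (tau_of s i) (H' i));
          H'' = (\<lambda>i. if tau' i \<noteq> tau_of s i then [] else H' i)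
      in return_pmf (tau', H'', found', Suc t))))"

fun sig_cga_run :: "real \<Rightarrow> nat \<Rightarrow> nat \<Rightarrow> state pmf" where
  "sig_cga_run \<epsilon> n 0 = return_pmf init_state"
| "sig_cga_run \<epsilon> n (Suc k) = bind_pmf (sig_cga_run \<epsilon> n k) (sig_cga_step \<epsilon> n)"

text \<open>Probability that the runtime (number of fitness evaluations until the optimum is
  first sampled) is at most T. Running ceil(T) iterations is enough since each iteration
  performs two evaluations.\<close>
definition prob_runtime_le :: "real \<Rightarrow> nat \<Rightarrow> real \<Rightarrow> real" where
  "prob_runtime_le \<epsilon> n T =
     measure_pmf.prob (sig_cga_run \<epsilon> n (nat \<lceil>T\<rceil>))
       {s. \<exists>r. found_of s = Some r \<and> real r \<le> T}"

end

theory Submission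
  imports Defs
begin


fun samp :: "real list \<Rightarrow> bool list pmf" where
  "samp [] = return_pmf []"
| "samp (p # ps) = bind_pmf (bernoulli_pmf p) (\<lambda>b. map_pmf (Cons b) (samp ps))"

lemma sample_bits_samp: "sample_bits tau is = samp (map tau is)"
  by (induction "is") (simp_all add: map_pmf_def)

lemma set_samp: "xs \<in> set_pmf (samp ps) \<Longrightarrow> length xs = length ps"
  by (induction ps arbitrary: xs) auto

fun dlb :: "bool list \<Rightarrow> nat" where
  "dlb (a # b # r) = (if a \<and> b then 2 + dlb r else if \<not> a \<and> \<not> b then 1 else 0)"
| "dlb _ = 0"

lemma all_ones_Suc2: "all_ones (Suc (Suc k)) = True # True # all_ones k"
  by (simp add: all_ones_def)

lemma DLB_dlb: "length x = n \<Longrightarrow> even n \<Longrightarrow> DLB n x = dlb x"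
proof (induction x arbitrary: n rule: dlb.induct)
  case (1 a b r)
  then obtain k where n: "n = Suc (Suc k)" and lr: "length r = k" and ek: "even k" by auto
  show ?case
  proof (cases "a \<and> b")
    case True
    then have ab: "a" "b" by auto
    have IH: "DLB k r = dlb r" using 1 lr ek True by auto
    show ?thesis
    proof (cases "r = all_ones k")
      case True
      then have "a # b # r = all_ones n" using ab n by (simp add: all_ones_Suc2)
      moreover have "DLB k r = k" using True by (simp add: DLB_def)
      moreover have "dlb (a # b # r) = 2 + dlb r" using ab by simp
      ultimately show ?thesis using n IH unfolding DLB_def by simp
    next
      case False
      then have ne: "a # b # r \<noteq> all_ones n" using ab n by (simp add: all_ones_Suc2)
      have "\<exists>l. \<not> (r ! (2*l) \<and> r ! (2*l+1))"
      proof (rule ccontr)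
        assume "\<not> ?thesis"
        then have allb: "\<forall>l. r ! (2*l) \<and> r ! (2*l+1)" by auto
        have "\<forall>j<k. r ! j"
        proof (intro allI impI)
          fix j assume "j < k"
          show "r ! j"
          proof (cases "even j")
            case True then obtain l where "j = 2*l" by auto
            then show ?thesis using allb by auto
          next
            case False then obtain l where "j = 2*l+1" using oddE by blast
            then show ?thesis using allb by auto
          qed
        qed
        then have "r = all_ones k" using lr
          by (simp add: all_ones_def list_eq_iff_nth_eq)
        then show False using False by simp
      qed
      then obtain l0 where l0: "\<not> (r ! (2*l0) \<and> r ! (2*l0+1))" by blast
      let ?P = "\<lambda>l. \<not> ((a # b # r) ! (2*l) \<and> (a # b # r) ! (2*l+1))"
      have "?P (Suc l0)" using l0 by simp
      moreover have "\<not> ?P 0" using ab by simp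
      ultimately have Lst: "(LEAST l. ?P l) = Suc (LEAST l. ?P (Suc l))" by (rule Least_Suc)
      define m' where "m' = (LEAST l. \<not> (r ! (2*l) \<and> r ! (2*l+1)))"
      have Lst2: "(LEAST l. ?P l) = Suc m'" unfolding Lst m'_def by simp
      have rne: "r \<noteq> all_ones k" using False .
      have D1: "DLB n (a # b # r) = (if \<not> r ! (2*m') \<and> \<not> r ! (2*m'+1) then 2*Suc m'+1 else 2*Suc m')"
        using ne Lst2 unfolding DLB_def Let_def by simp
      have D2: "DLB k r = (if \<not> r ! (2*m') \<and> \<not> r ! (2*m'+1) then 2*m'+1 else 2*m')"
        using rne unfolding DLB_def Let_def m'_def by simp
      have "dlb (a # b # r) = 2 + dlb r" using ab by simp
      then show ?thesis using D1 D2 IH by auto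
    qed
  next
    case False
    then have ne: "a # b # r \<noteq> all_ones n" using n by (auto simp: all_ones_Suc2)
    have L0: "(LEAST l. \<not> ((a # b # r) ! (2*l) \<and> (a # b # r) ! (2*l+1))) = 0"
      using False by (intro Least_equality) auto
    show ?thesis using ne L0 False n by (auto simp: DLB_def Let_def)
  qed
next
  case ("2_1")
  then show ?case by (simp add: DLB_def all_ones_def)
next
  case ("2_2" v)
  then have "n = 1" by simp
  then show ?case using "2_2" by simp
qed

definition sel :: "bool \<Rightarrow> bool list \<Rightarrow> bool list \<Rightarrow> bool list" where
  "sel c x y = (if dlb x > dlb y then x else if dlb y > dlb x then y else if c then x else y)"

lemma winner_sel: "length x = n \<Longrightarrow> length y = n \<Longrightarrow> even n \<Longrightarrow>
   winner n x y = map_pmf (\<lambda>c. sel c x y) (bernoulli_pmf (1/2))"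
  by (auto simp: winner_def sel_def DLB_dlb map_pmf_def)

definition W :: "real list \<Rightarrow> bool list pmf" where
  "W ps = bind_pmf (samp ps) (\<lambda>x. bind_pmf (samp ps) (\<lambda>y. map_pmf (\<lambda>c. sel c x y) (bernoulli_pmf (1/2))))"

lemma step_W: "even n \<Longrightarrow>
  bind_pmf (sample_ind n tau) (\<lambda>x. bind_pmf (sample_ind n tau) (\<lambda>y. winner n x y)) = W (map tau [0..<n])"
  unfolding W_def sample_ind_def sample_bits_samp
  by (intro bind_pmf_cong refl) (auto dest!: set_samp simp: winner_sel)


lemma bool_pmf_bern: "(M :: bool pmf) = bernoulli_pmf (pmf M True)"
proof (rule pmf_eqI)
  fix b :: bool
  have s: "pmf M True + pmf M False = 1"
  proof -
    have "measure_pmf.prob M UNIV = 1" by simp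
    moreover have "measure_pmf.prob M UNIV = sum (pmf M) {False, True}"
      by (subst measure_measure_pmf_finite[symmetric]) (auto simp: UNIV_bool)
    ultimately show ?thesis by simp
  qed
  have "0 \<le> pmf M True" "pmf M True \<le> 1" by (simp_all add: pmf_le_1)
  then show "pmf M b = pmf (bernoulli_pmf (pmf M True)) b"
    using s by (cases b) auto
qed

lemma pmf_bind_bern: "0 \<le> p \<Longrightarrow> p \<le> 1 \<Longrightarrow>
  pmf (bind_pmf (bernoulli_pmf p) F) x = p * pmf (F True) x + (1 - p) * pmf (F False) x"
  by (simp add: pmf_bind)

lemma pmf_map_bool: "pmf (map_pmf f M) True = measure_pmf.prob M {x. f x}"
  by (simp add: pmf_map vimage_def)

lemma prob_bern: "0 \<le> p \<Longrightarrow> p \<le> 1 \<Longrightarrow>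
  measure_pmf.prob (bernoulli_pmf p) A = (if True \<in> A then p else 0) + (if False \<in> A then 1 - p else 0)"
proof -
  assume "0 \<le> p" "p \<le> 1"
  have "A \<subseteq> {True, False}" by auto
  then have "measure_pmf.prob (bernoulli_pmf p) A = sum (pmf (bernoulli_pmf p)) A"
    by (intro measure_measure_pmf_finite) (auto intro: finite_subset)
  also have "\<dots> = sum (\<lambda>x. if x \<in> A then pmf (bernoulli_pmf p) x else 0) UNIV"
    using sum.inter_restrict[of UNIV "pmf (bernoulli_pmf p)" A] by simp
  also have "\<dots> = (if True \<in> A then p else 0) + (if False \<in> A then 1 - p else 0)"
    using \<open>0 \<le> p\<close> \<open>p \<le> 1\<close> by (simp add: UNIV_bool)
  finally show ?thesis .
qed

lemma samp_bit: "i < length ps \<Longrightarrow> (\<forall>p\<in>set ps. 0 \<le> p \<and> p \<le> 1) \<Longrightarrow>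
  map_pmf (\<lambda>x. x ! i) (samp ps) = bernoulli_pmf (ps ! i)"
proof (induction ps arbitrary: i)
  case Nil then show ?case by simp
next
  case (Cons p ps)
  show ?case
  proof (cases i)
    case 0
    then show ?thesis by (simp add: map_bind_pmf map_pmf_comp bind_return_pmf' map_pmf_def[symmetric] o_def)
  next
    case (Suc j)
    then have "map_pmf (\<lambda>x. x ! j) (samp ps) = bernoulli_pmf (ps ! j)" using Cons by auto
    then show ?thesis using Suc by (simp add: map_bind_pmf map_pmf_comp o_def bind_pmf_const)
  qed
qed

definition Phi :: "bool \<Rightarrow> bool \<Rightarrow> bool \<Rightarrow> bool \<Rightarrow> bool \<Rightarrow> bool" where
  "Phi a1 b1 a2 b2 c = (if a1 \<and> b1 then True else if a2 \<and> b2 then False else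
     (dlb [a1,b1] > dlb [a2,b2] \<or> (dlb [a1,b1] = dlb [a2,b2] \<and> c)))"

lemma sel_split: "sel c (a1#b1#x) (a2#b2#y) =
  (if a1 \<and> b1 \<and> a2 \<and> b2 then True#True#sel c x y
   else if Phi a1 b1 a2 b2 c then a1#b1#x else a2#b2#y)"
  by (cases a1; cases b1; cases a2; cases b2; simp add: sel_def Phi_def)

lemma swap2: "bind_pmf A (\<lambda>x. bind_pmf B (\<lambda>y. bind_pmf C (\<lambda>z. K x y z))) =
  bind_pmf B (\<lambda>y. bind_pmf C (\<lambda>z. bind_pmf A (\<lambda>x. K x y z)))"
proof -
  have "\<And>x. bind_pmf B (\<lambda>y. bind_pmf C (\<lambda>z. K x y z)) = bind_pmf B (\<lambda>y. bind_pmf C (\<lambda>z. K x y z))" by simp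
  have "bind_pmf A (\<lambda>x. bind_pmf B (\<lambda>y. bind_pmf C (\<lambda>z. K x y z))) =
        bind_pmf B (\<lambda>y. bind_pmf A (\<lambda>x. bind_pmf C (\<lambda>z. K x y z)))" by (rule bind_commute_pmf)
  also have "\<dots> = bind_pmf B (\<lambda>y. bind_pmf C (\<lambda>z. bind_pmf A (\<lambda>x. K x y z)))"
    by (intro bind_pmf_cong refl) (rule bind_commute_pmf)
  finally show ?thesis .
qed

lemma W_reorder: "W (a # b # ps) =
  bind_pmf (bernoulli_pmf a) (\<lambda>a1. bind_pmf (bernoulli_pmf b) (\<lambda>b1.
  bind_pmf (bernoulli_pmf a) (\<lambda>a2. bind_pmf (bernoulli_pmf b) (\<lambda>b2.
  bind_pmf (samp ps) (\<lambda>x. bind_pmf (samp ps) (\<lambda>y.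
     map_pmf (\<lambda>c. sel c (a1#b1#x) (a2#b2#y)) (bernoulli_pmf (1/2))))))))"
  unfolding W_def
  apply (simp only: samp.simps map_bind_pmf bind_map_pmf bind_assoc_pmf map_pmf_comp)
  apply (simp only: swap2[of "samp ps" "bernoulli_pmf a" "bernoulli_pmf b"])
  done

lemma if_sel_gen:
  assumes hf: "\<And>x. h (f x) = k x" and hg: "\<And>x. h (g x) = k x"
  shows "map_pmf h (bind_pmf M (\<lambda>x. bind_pmf M (\<lambda>y. map_pmf (\<lambda>c. if P c then f x else g y) C)))
   = map_pmf k M"
proof -
  have "map_pmf h (bind_pmf M (\<lambda>x. bind_pmf M (\<lambda>y. map_pmf (\<lambda>c. if P c then f x else g y) C)))
      = bind_pmf M (\<lambda>x. bind_pmf M (\<lambda>y. map_pmf (\<lambda>c. if P c then k x else k y) C))"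
  proof -
    have e: "\<And>x y. (\<lambda>c. h (if P c then f x else g y)) = (\<lambda>c. if P c then k x else k y)"
      using hf hg by (auto simp: fun_eq_iff)
    show ?thesis by (simp only: map_bind_pmf map_pmf_comp e)
  qed
  also have "\<dots> = bind_pmf C (\<lambda>c. bind_pmf M (\<lambda>x. bind_pmf M (\<lambda>y. return_pmf (if P c then k x else k y))))"
  proof -
    have i: "\<And>x. bind_pmf M (\<lambda>y. bind_pmf C (\<lambda>c. return_pmf (if P c then k x else k y)))
       = bind_pmf C (\<lambda>c. bind_pmf M (\<lambda>y. return_pmf (if P c then k x else k y)))"
      by (rule bind_commute_pmf)
    have o: "bind_pmf M (\<lambda>x. bind_pmf C (\<lambda>c. bind_pmf M (\<lambda>y. return_pmf (if P c then k x else k y))))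
      = bind_pmf C (\<lambda>c. bind_pmf M (\<lambda>x. bind_pmf M (\<lambda>y. return_pmf (if P c then k x else k y))))"
      by (rule bind_commute_pmf)
    show ?thesis unfolding map_pmf_def i o ..
  qed
  also have "\<dots> = bind_pmf C (\<lambda>c. map_pmf k M)"
  proof (intro bind_pmf_cong refl)
    fix c
    show "bind_pmf M (\<lambda>x. bind_pmf M (\<lambda>y. return_pmf (if P c then k x else k y))) = map_pmf k M"
      by (cases "P c") (simp_all add: bind_pmf_const map_pmf_def)
  qed
  also have "\<dots> = map_pmf k M" by (simp add: bind_pmf_const)
  finally show ?thesis .
qed


definition fa :: "real \<Rightarrow> real \<Rightarrow> real" where
  "fa a b = 1 - (1 - a*b)^2 + a*(1-b)*(a*(1-b) + (1-a)*b)"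

fun beta :: "real list \<Rightarrow> nat \<Rightarrow> real" where
  "beta (a # b # ps) 0 = fa a b"
| "beta (a # b # ps) (Suc 0) = fa b a"
| "beta (a # b # ps) (Suc (Suc j)) = (a*b)^2 * beta ps j + (1 - (a*b)^2) * ps ! j"
| "beta _ _ = 0"

abbreviation coin where "coin \<equiv> bernoulli_pmf (1/2)"

definition G :: "real list \<Rightarrow> bool \<Rightarrow> bool \<Rightarrow> bool \<Rightarrow> bool \<Rightarrow> bool list pmf" where
  "G ps a1 b1 a2 b2 = bind_pmf (samp ps) (\<lambda>x. bind_pmf (samp ps) (\<lambda>y.
     map_pmf (\<lambda>c. sel c (a1#b1#x) (a2#b2#y)) coin))"

lemma W_reorderG: "W (a # b # ps) =
  bind_pmf (bernoulli_pmf a) (\<lambda>a1. bind_pmf (bernoulli_pmf b) (\<lambda>b1.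
  bind_pmf (bernoulli_pmf a) (\<lambda>a2. bind_pmf (bernoulli_pmf b) (\<lambda>b2. G ps a1 b1 a2 b2))))"
  unfolding G_def by (rule W_reorder)

lemma G_all: "G ps True True True True = map_pmf (\<lambda>z. True # True # z) (W ps)"
  unfolding G_def W_def sel_split by (simp add: map_bind_pmf map_pmf_comp)

lemma G_not_all: "G ps a1 b1 a2 b2 =
   bind_pmf (samp ps) (\<lambda>x. bind_pmf (samp ps) (\<lambda>y.
     map_pmf (\<lambda>c. if Phi a1 b1 a2 b2 c then a1#b1#x else a2#b2#y) coin))" if "\<not> (a1 \<and> b1 \<and> a2 \<and> b2)"
  unfolding G_def sel_split if_not_P[OF that] by (rule refl)

lemma G_bit0: "map_pmf (\<lambda>z. z ! 0) (G ps a1 b1 a2 b2) =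
  (if a1 \<and> b1 \<and> a2 \<and> b2 then return_pmf True else map_pmf (\<lambda>c. if Phi a1 b1 a2 b2 c then a1 else a2) coin)"
proof (cases "a1 \<and> b1 \<and> a2 \<and> b2")
  case True
  then show ?thesis by (simp add: G_all map_pmf_comp)
next
  case False
  then show ?thesis
    by (simp add: G_not_all map_bind_pmf map_pmf_comp if_distrib[of "\<lambda>z. z ! 0"] cong: if_cong)
qed

lemma G_bit1: "map_pmf (\<lambda>z. z ! 1) (G ps a1 b1 a2 b2) =
  (if a1 \<and> b1 \<and> a2 \<and> b2 then return_pmf True else map_pmf (\<lambda>c. if Phi a1 b1 a2 b2 c then b1 else b2) coin)"
proof (cases "a1 \<and> b1 \<and> a2 \<and> b2")
  case True
  then show ?thesis by (simp add: G_all map_pmf_comp)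
next
  case False
  then show ?thesis
    by (simp add: G_not_all map_bind_pmf map_pmf_comp if_distrib[of "\<lambda>z. z ! 1"] cong: if_cong)
qed

lemma G_bitSS: "map_pmf (\<lambda>z. z ! Suc (Suc j)) (G ps a1 b1 a2 b2) =
  (if a1 \<and> b1 \<and> a2 \<and> b2 then map_pmf (\<lambda>z. z ! j) (W ps) else map_pmf (\<lambda>z. z ! j) (samp ps))"
proof (cases "a1 \<and> b1 \<and> a2 \<and> b2")
  case True
  then show ?thesis by (simp add: G_all map_pmf_comp)
next
  case False
  have "map_pmf (\<lambda>z. z ! Suc (Suc j)) (G ps a1 b1 a2 b2) = map_pmf (\<lambda>z. z ! j) (samp ps)"
    unfolding G_not_all[OF False] by (rule if_sel_gen) auto
  then show ?thesis unfolding if_not_P[OF False] .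
qed

lemma W_bit0: "0 \<le> a \<Longrightarrow> a \<le> 1 \<Longrightarrow> 0 \<le> b \<Longrightarrow> b \<le> 1 \<Longrightarrow>
  pmf (map_pmf (\<lambda>z. z ! 0) (W (a # b # ps))) True = fa a b"
  apply (simp only: W_reorderG map_bind_pmf G_bit0)
  apply (simp add: pmf_bind_bern pmf_map_bool prob_bern Phi_def)
  apply (simp add: fa_def algebra_simps power2_eq_square)
  done

lemma W_bit1: "0 \<le> a \<Longrightarrow> a \<le> 1 \<Longrightarrow> 0 \<le> b \<Longrightarrow> b \<le> 1 \<Longrightarrow>
  pmf (map_pmf (\<lambda>z. z ! 1) (W (a # b # ps))) True = fa b a"
  apply (simp only: W_reorderG map_bind_pmf G_bit1)
  apply (simp add: pmf_bind_bern pmf_map_bool prob_bern Phi_def)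
  apply (simp add: fa_def algebra_simps power2_eq_square)
  done

lemma W_bitSS: "0 \<le> a \<Longrightarrow> a \<le> 1 \<Longrightarrow> 0 \<le> b \<Longrightarrow> b \<le> 1 \<Longrightarrow>
  pmf (map_pmf (\<lambda>z. z ! Suc (Suc j)) (W (a # b # ps))) True =
   (a*b)^2 * pmf (map_pmf (\<lambda>z. z ! j) (W ps)) True + (1 - (a*b)^2) * pmf (map_pmf (\<lambda>z. z ! j) (samp ps)) True"
  apply (simp only: W_reorderG map_bind_pmf G_bitSS)
  apply (simp add: pmf_bind_bern)
  apply (simp add: algebra_simps power2_eq_square)
  done


lemma samp_bit_pmf: "i < length ps \<Longrightarrow> (\<forall>p\<in>set ps. 0 \<le> p \<and> p \<le> 1) \<Longrightarrow>
  pmf (map_pmf (\<lambda>x. x ! i) (samp ps)) True = ps ! i"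
  by (simp add: samp_bit)

lemma W_bit: "even (length ps) \<Longrightarrow> (\<forall>p\<in>set ps. 0 \<le> p \<and> p \<le> 1) \<Longrightarrow> i < length ps \<Longrightarrow>
  pmf (map_pmf (\<lambda>z. z ! i) (W ps)) True = beta ps i"
proof (induction ps arbitrary: i rule: induct_list012)
  case 1 then show ?case by simp
next
  case (2 x) then show ?case by simp
next
  case (3 a b ps)
  then have ab: "0 \<le> a" "a \<le> 1" "0 \<le> b" "b \<le> 1" by auto
  show ?case
  proof (cases i)
    case 0 then show ?thesis using W_bit0[OF ab] by simp
  next
    case (Suc i')
    show ?thesis
    proof (cases i')
      case 0 then show ?thesis using W_bit1[OF ab] Suc by simp
    next
      case (Suc j)
      have j: "j < length ps" using 3 Suc \<open>i = Suc i'\<close> by simp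
      have IH: "pmf (map_pmf (\<lambda>z. z ! j) (W ps)) True = beta ps j"
        using 3 j by auto
      have S: "pmf (map_pmf (\<lambda>z. z ! j) (samp ps)) True = ps ! j"
        using 3 j by (intro samp_bit_pmf) auto
      show ?thesis using W_bitSS[OF ab, of j ps] IH S Suc \<open>i = Suc i'\<close> by simp
    qed
  qed
qed

lemma prob_W_bit: "even (length ps) \<Longrightarrow> (\<forall>p\<in>set ps. 0 \<le> p \<and> p \<le> 1) \<Longrightarrow> i < length ps \<Longrightarrow>
  measure_pmf.prob (W ps) {z. z ! i} = beta ps i"
  using W_bit[of ps i] by (simp add: pmf_map_bool)

lemma fa_half: "fa a (1/2) - a = a * (1 - a) / 4"
  by (simp add: fa_def algebra_simps power2_eq_square)

lemma fa_high: "fa a (1 - e) - a = a * (1 - a) * (1 - e - e^2)"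
  by (simp add: fa_def algebra_simps power2_eq_square)

definition okp :: "real \<Rightarrow> real \<Rightarrow> bool" where "okp e p \<longleftrightarrow> p = 1/2 \<or> p = 1 - e"

lemma fa_ge: "0 < e \<Longrightarrow> e \<le> 1/4 \<Longrightarrow> okp e a \<Longrightarrow> okp e b \<Longrightarrow> fa a b - a \<ge> 0"
proof -
  assume e: "0 < e" "e \<le> 1/4" and oa: "okp e a" and ob: "okp e b"
  have a01: "0 \<le> a * (1 - a)" using oa e unfolding okp_def by auto
  have "e * e \<le> e * (1/4)" using e by (intro mult_left_mono) auto
  moreover have "e^2 = e * e" by (simp add: power2_eq_square)
  ultimately have "1 - e - e^2 \<ge> 0" using e by linarith
  then have h: "0 \<le> a * (1 - a) * (1 - e - e^2)" using a01 by simp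
  from ob have "b = 1/2 \<or> b = 1 - e" by (simp add: okp_def)
  then show ?thesis
  proof
    assume b: "b = 1/2" show ?thesis unfolding b using fa_half[of a] a01 by simp
  next
    assume b: "b = 1 - e" show ?thesis unfolding b using fa_high[of a e] h by simp
  qed
qed

lemma fa_half_ge: "0 < e \<Longrightarrow> e \<le> 1/4 \<Longrightarrow> okp e b \<Longrightarrow> fa (1/2) b - 1/2 \<ge> 1/16"
proof -
  assume e: "0 < e" "e \<le> 1/4" and ob: "okp e b"
  have "e * e \<le> e * (1/4)" using e by (intro mult_left_mono) auto
  moreover have "e^2 = e * e" by (simp add: power2_eq_square)
  ultimately have "1 - e - e^2 \<ge> 1/4" using e by linarith
  from ob have "b = 1/2 \<or> b = 1 - e" by (simp add: okp_def)
  then show ?thesis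
  proof
    assume b: "b = 1/2" show ?thesis unfolding b using fa_half[of "1/2"] by simp
  next
    assume b: "b = 1 - e" show ?thesis unfolding b using fa_high[of "1/2" e] \<open>1 - e - e^2 \<ge> 1/4\<close> by simp
  qed
qed

lemma beta_ge: "even (length ps) \<Longrightarrow> (\<forall>p\<in>set ps. okp e p) \<Longrightarrow> 0 < e \<Longrightarrow> e \<le> 1/4 \<Longrightarrow>
  i < length ps \<Longrightarrow> beta ps i \<ge> ps ! i"
proof (induction ps arbitrary: i rule: induct_list012)
  case 1 then show ?case by simp
next
  case (2 x) then show ?case by simp
next
  case (3 a b ps)
  then have oa: "okp e a" and ob: "okp e b" by auto
  show ?case
  proof (cases i)
    case 0 then show ?thesis using fa_ge[OF 3(5,6) oa ob] by simp
  next
    case (Suc i')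
    show ?thesis
    proof (cases i')
      case 0 then show ?thesis using fa_ge[OF 3(5,6) ob oa] Suc by simp
    next
      case (Suc j)
      have j: "j < length ps" using 3 Suc \<open>i = Suc i'\<close> by simp
      have IH: "beta ps j \<ge> ps ! j" using 3 j by auto
      have "(a*b)^2 * beta ps j + (1 - (a*b)^2) * ps ! j \<ge> ps ! j"
      proof -
        have "(a*b)^2 * beta ps j \<ge> (a*b)^2 * ps ! j" using IH by (simp add: mult_left_mono)
        then show ?thesis by (simp add: algebra_simps)
      qed
      then show ?thesis using Suc \<open>i = Suc i'\<close> by simp
    qed
  qed
qed

lemma beta_crit: "even (length ps) \<Longrightarrow> (\<forall>p\<in>set ps. okp e p) \<Longrightarrow> 0 < e \<Longrightarrow> e \<le> 1/4 \<Longrightarrow>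
  i < length ps \<Longrightarrow> ps ! i = 1/2 \<Longrightarrow> (\<forall>k < 2 * (i div 2). ps ! k = 1 - e) \<Longrightarrow>
  beta ps i \<ge> 1/2 + (1 - e)^(4 * (i div 2)) / 16"
proof (induction ps arbitrary: i rule: induct_list012)
  case 1 then show ?case by simp
next
  case (2 x) then show ?case by simp
next
  case (3 a b ps)
  then have oa: "okp e a" and ob: "okp e b" by auto
  show ?case
  proof (cases i)
    case 0
    then have a: "a = 1/2" using 3(8) by simp
    show ?thesis using fa_half_ge[OF 3(5,6) ob] 0 unfolding a by simp
  next
    case (Suc i')
    show ?thesis
    proof (cases i')
      case 0
      then have b: "b = 1/2" using 3(8) Suc by simp
      show ?thesis using fa_half_ge[OF 3(5,6) oa] 0 Suc unfolding b by simp
    next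
      case (Suc j)
      have ii: "i = Suc (Suc j)" using Suc \<open>i = Suc i'\<close> by simp
      have j: "j < length ps" using 3 ii by simp
      have a1: "a = 1 - e" using 3(9)[rule_format, of 0] ii by simp
      have b1: "b = 1 - e" using 3(9)[rule_format, of 1] ii by simp
      have pj: "ps ! j = 1/2" using 3(8) ii by simp
      have pre: "\<forall>k < 2 * (j div 2). ps ! k = 1 - e"
      proof (intro allI impI)
        fix k assume "k < 2 * (j div 2)"
        then have "Suc (Suc k) < 2 * (i div 2)" using ii by simp
        then show "ps ! k = 1 - e" using 3(9) by fastforce
      qed
      have IH: "beta ps j \<ge> 1/2 + (1 - e)^(4 * (j div 2)) / 16"
        using 3(2)[of j] 3 j pj pre by auto
      have idiv: "i div 2 = Suc (j div 2)" using ii by simp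
      have ab2: "(a*b)^2 = (1-e)^4" using a1 b1 by (simp add: power2_eq_square power4_eq_xxxx)
      have "(a*b)^2 * beta ps j + (1 - (a*b)^2) * ps ! j - 1/2 = (a*b)^2 * (beta ps j - 1/2)"
        unfolding pj by (simp add: algebra_simps)
      also have "\<dots> \<ge> (1-e)^4 * ((1 - e)^(4 * (j div 2)) / 16)"
        unfolding ab2 using IH 3(5,6) by (intro mult_left_mono) auto
      also have "(1-e)^4 * ((1 - e)^(4 * (j div 2)) / 16) = (1 - e)^(4 * (i div 2)) / 16"
        using idiv by (simp add: power_add)
      finally show ?thesis using ii by simp
    qed
  qed
qed


definition nxt :: "real \<Rightarrow> nat \<Rightarrow> state \<Rightarrow> bool list \<Rightarrow> bool list \<Rightarrow> bool list \<Rightarrow> state" where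
  "nxt \<epsilon> n s x y z = (let t = iter_of s;
          found' = (case found_of s of Some r \<Rightarrow> Some r
                    | None \<Rightarrow> if x = all_ones n then Some (2*t+1)
                              else if y = all_ones n then Some (2*t+2) else None);
          H' = (\<lambda>i. hist_of s i @ [z ! i]);
          tau' = (\<lambda>i. new_tau \<epsilon> n (tau_of s i) (H' i));
          H'' = (\<lambda>i. if tau' i \<noteq> tau_of s i then [] else H' i)
      in (tau', H'', found', Suc t))"

definition trip :: "nat \<Rightarrow> state \<Rightarrow> (bool list \<times> bool list \<times> bool list) pmf" where
  "trip n s = bind_pmf (sample_ind n (tau_of s)) (\<lambda>x. bind_pmf (sample_ind n (tau_of s)) (\<lambda>y.
      map_pmf (\<lambda>z. (x, y, z)) (winner n x y)))"

lemma step_trip: "sig_cga_step \<epsilon> n s = map_pmf (\<lambda>w. nxt \<epsilon> n s (fst w) (fst (snd w)) (snd (snd w))) (trip n s)"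
  unfolding sig_cga_step_def trip_def nxt_def
  by (simp add: map_pmf_def bind_assoc_pmf bind_return_pmf Let_def cong: if_cong option.case_cong)

lemma tau_nxt: "tau_of (nxt \<epsilon> n s x y z) i = new_tau \<epsilon> n (tau_of s i) (hist_of s i @ [z ! i])"
  by (simp add: nxt_def Let_def tau_of_def)

lemma hist_nxt: "hist_of (nxt \<epsilon> n s x y z) i =
   (if new_tau \<epsilon> n (tau_of s i) (hist_of s i @ [z ! i]) \<noteq> tau_of s i then [] else hist_of s i @ [z ! i])"
  by (simp add: nxt_def Let_def hist_of_def tau_of_def)

lemma iter_nxt: "iter_of (nxt \<epsilon> n s x y z) = Suc (iter_of s)"
  by (simp add: nxt_def Let_def iter_of_def)

lemma found_nxt: "found_of (nxt \<epsilon> n s x y z) = (case found_of s of Some r \<Rightarrow> Some r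
                    | None \<Rightarrow> if x = all_ones n then Some (2*iter_of s+1)
                              else if y = all_ones n then Some (2*iter_of s+2) else None)"
  by (simp add: nxt_def Let_def found_of_def)

type_synonym ast = "state \<times> bool \<times> nat"

definition Qc :: "nat \<Rightarrow> state \<Rightarrow> nat" where
  "Qc n s = card {i. i < n \<and> tau_of s i = 1/2}"
definition chg :: "nat \<Rightarrow> state \<Rightarrow> state \<Rightarrow> bool" where
  "chg n s s' \<longleftrightarrow> (\<exists>i<n. tau_of s' i \<noteq> tau_of s i)"
definition dcr :: "nat \<Rightarrow> state \<Rightarrow> state \<Rightarrow> bool" where
  "dcr n s s' \<longleftrightarrow> (\<exists>i<n. tau_of s' i < tau_of s i)"

definition anx :: "real \<Rightarrow> nat \<Rightarrow> nat \<Rightarrow> ast \<Rightarrow> bool list \<times> bool list \<times> bool list \<Rightarrow> ast" where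
  "anx \<epsilon> n L a w = (let s = fst a; s' = nxt \<epsilon> n s (fst w) (fst (snd w)) (snd (snd w)) in
     (s', fst (snd a) \<or> dcr n s s' \<or> (0 < Qc n s \<and> L \<le> Suc (snd (snd a)) \<and> \<not> chg n s s'),
      if chg n s s' then 0 else Suc (snd (snd a))))"

definition astep :: "real \<Rightarrow> nat \<Rightarrow> nat \<Rightarrow> ast \<Rightarrow> ast pmf" where
  "astep \<epsilon> n L a = map_pmf (anx \<epsilon> n L a) (trip n (fst a))"

fun arun :: "real \<Rightarrow> nat \<Rightarrow> nat \<Rightarrow> nat \<Rightarrow> ast pmf" where
  "arun \<epsilon> n L 0 = return_pmf (init_state, False, 0)"
| "arun \<epsilon> n L (Suc k) = bind_pmf (arun \<epsilon> n L k) (astep \<epsilon> n L)"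

definition atr :: "real \<Rightarrow> nat \<Rightarrow> nat \<Rightarrow> nat \<Rightarrow> (ast \<times> (bool list \<times> bool list \<times> bool list)) pmf" where
  "atr \<epsilon> n L k = bind_pmf (arun \<epsilon> n L k) (\<lambda>a. map_pmf (\<lambda>w. (a, w)) (trip n (fst a)))"

lemma arun_Suc_atr: "arun \<epsilon> n L (Suc k) = map_pmf (\<lambda>p. anx \<epsilon> n L (fst p) (snd p)) (atr \<epsilon> n L k)"
  by (simp add: atr_def astep_def[abs_def] map_bind_pmf map_pmf_comp)

lemma arun_proj: "map_pmf fst (arun \<epsilon> n L k) = sig_cga_run \<epsilon> n k"
proof (induction k)
  case 0 then show ?case by simp
next
  case (Suc k)
  have "map_pmf fst (arun \<epsilon> n L (Suc k)) = bind_pmf (arun \<epsilon> n L k) (\<lambda>a. sig_cga_step \<epsilon> n (fst a))"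
    by (simp add: map_bind_pmf astep_def map_pmf_comp step_trip anx_def Let_def)
  also have "\<dots> = bind_pmf (map_pmf fst (arun \<epsilon> n L k)) (sig_cga_step \<epsilon> n)"
    by (simp add: bind_map_pmf)
  finally show ?case using Suc by simp
qed


lemma lastk_snoc: "lastk (Suc j) (H @ [b]) = lastk j H @ [b]"
  by (simp add: lastk_def)

lemma zeros_snoc: "zeros (H @ [b]) = zeros H + (if b then 0 else 1)"
  by (simp add: zeros_def)

lemma lastk_0: "lastk 0 H = []"
  by (simp add: lastk_def)

lemma mgf_step:
  fixes M :: "'a pmf" and P :: "'a \<Rightarrow> bool"
  assumes "measure_pmf.prob M {w. \<not> P w} \<le> q" "0 \<le> lam"
  shows "(\<integral>\<^sup>+w. ennreal (exp (lam * (if P w then 0 else 1))) \<partial>M) \<le> ennreal (1 + q * (exp lam - 1))"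
proof -
  have c0: "0 \<le> exp lam - 1" using assms(2) by simp
  have "(\<integral>\<^sup>+w. ennreal (exp (lam * (if P w then 0 else 1))) \<partial>M) =
        (\<integral>\<^sup>+w. 1 + ennreal (exp lam - 1) * indicator {w. \<not> P w} w \<partial>M)"
  proof (intro nn_integral_cong)
    fix w
    have e1: "ennreal (exp lam) = 1 + ennreal (exp lam - 1)"
      using ennreal_plus[of 1 "exp lam - 1"] c0 by simp
    show "ennreal (exp (lam * (if P w then 0 else 1))) = 1 + ennreal (exp lam - 1) * indicator {w. \<not> P w} w"
      using e1 by (simp add: indicator_def)
  qed
  also have "\<dots> = (\<integral>\<^sup>+w. 1 \<partial>M) + (\<integral>\<^sup>+w. ennreal (exp lam - 1) * indicator {w. \<not> P w} w \<partial>M)"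
    by (rule nn_integral_add) auto
  also have "\<dots> = 1 + ennreal (exp lam - 1) * emeasure M {w. \<not> P w}"
    by (simp add: nn_integral_cmult_indicator)
  also have "\<dots> = ennreal (1 + (exp lam - 1) * measure_pmf.prob M {w. \<not> P w})"
    using c0 by (simp add: measure_pmf.emeasure_eq_measure ennreal_mult ennreal_plus)
  also have "\<dots> \<le> ennreal (1 + q * (exp lam - 1))"
  proof (intro ennreal_leI)
    have "(exp lam - 1) * measure_pmf.prob M {w. \<not> P w} \<le> (exp lam - 1) * q"
      using assms(1) c0 by (rule mult_left_mono)
    then show "1 + (exp lam - 1) * measure_pmf.prob M {w. \<not> P w} \<le> 1 + q * (exp lam - 1)"
      by (simp add: mult.commute)
  qed
  finally show ?thesis .
qed


definition Psi :: "(nat \<Rightarrow> ast \<Rightarrow> bool) \<Rightarrow> nat \<Rightarrow> real \<Rightarrow> real \<Rightarrow> nat \<Rightarrow> ast \<Rightarrow> ennreal" where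
  "Psi I i lam M j a = (if I j a then ennreal (exp (lam * real (zeros (lastk j (hist_of (fst a) i)))) / M ^ j) else 0)"

lemma psi_step:
  assumes H1: "\<And>w. w \<in> set_pmf (trip n (fst a)) \<Longrightarrow> I (Suc j) (anx \<epsilon> n L a w) \<Longrightarrow>
       I j a \<and> hist_of (fst (anx \<epsilon> n L a w)) i = hist_of (fst a) i @ [snd (snd w) ! i]"
    and H2: "I j a \<Longrightarrow> measure_pmf.prob (trip n (fst a)) {w. \<not> snd (snd w) ! i} \<le> q"
    and q: "0 \<le> q" and lam: "0 \<le> lam" and M: "M = 1 + q * (exp lam - 1)"
  shows "(\<integral>\<^sup>+w. Psi I i lam M (Suc j) (anx \<epsilon> n L a w) \<partial>trip n (fst a)) \<le> Psi I i lam M j a"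
proof (cases "I j a")
  case False
  have "(\<integral>\<^sup>+w. Psi I i lam M (Suc j) (anx \<epsilon> n L a w) \<partial>trip n (fst a)) = (\<integral>\<^sup>+w. 0 \<partial>trip n (fst a))"
    using H1 False by (intro nn_integral_cong_AE AE_pmfI) (auto simp: Psi_def)
  then show ?thesis by simp
next
  case True
  have M1: "1 \<le> M" using M q lam by (simp add: mult_nonneg_nonneg)
  define H where "H = hist_of (fst a) i"
  define E0 where "E0 = exp (lam * real (zeros (lastk j H))) / M ^ j"
  have E0: "0 \<le> E0" using M1 by (simp add: E0_def)
  have pw: "Psi I i lam M (Suc j) (anx \<epsilon> n L a w) \<le>
      ennreal (E0 / M) * ennreal (exp (lam * (if snd (snd w) ! i then 0 else 1)))"
    if w: "w \<in> set_pmf (trip n (fst a))" for w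
  proof (cases "I (Suc j) (anx \<epsilon> n L a w)")
    case False then show ?thesis by (simp add: Psi_def)
  next
    case True
    then have h: "hist_of (fst (anx \<epsilon> n L a w)) i = H @ [snd (snd w) ! i]" using H1 w H_def by auto
    have "exp (lam * real (zeros (lastk (Suc j) (H @ [snd (snd w) ! i])))) / M ^ Suc j
        = (E0 / M) * exp (lam * (if snd (snd w) ! i then 0 else 1))"
      by (simp add: lastk_snoc zeros_snoc E0_def algebra_simps exp_add)
    then show ?thesis using True h E0 M1 by (simp add: Psi_def ennreal_mult[symmetric])
  qed
  have "(\<integral>\<^sup>+w. Psi I i lam M (Suc j) (anx \<epsilon> n L a w) \<partial>trip n (fst a)) \<le>
      (\<integral>\<^sup>+w. ennreal (E0 / M) * ennreal (exp (lam * (if snd (snd w) ! i then 0 else 1))) \<partial>trip n (fst a))"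
    using pw by (intro nn_integral_mono_AE AE_pmfI) auto
  also have "\<dots> = ennreal (E0 / M) * (\<integral>\<^sup>+w. ennreal (exp (lam * (if snd (snd w) ! i then 0 else 1))) \<partial>trip n (fst a))"
    by (rule nn_integral_cmult) auto
  also have "\<dots> \<le> ennreal (E0 / M) * ennreal M"
    using mgf_step[OF H2[OF True] lam] M by (intro mult_left_mono) auto
  also have "\<dots> = ennreal E0" using M1 E0 by (simp add: ennreal_mult[symmetric])
  also have "\<dots> = Psi I i lam M j a" using True by (simp add: Psi_def E0_def H_def)
  finally show ?thesis .
qed

lemma supermart:
  assumes H1: "\<And>a w j. j < J \<Longrightarrow> w \<in> set_pmf (trip n (fst a)) \<Longrightarrow> I (Suc j) (anx \<epsilon> n L a w) \<Longrightarrow>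
       I j a \<and> hist_of (fst (anx \<epsilon> n L a w)) i = hist_of (fst a) i @ [snd (snd w) ! i]"
    and H2: "\<And>t a j. j \<le> J \<Longrightarrow> a \<in> set_pmf (arun \<epsilon> n L t) \<Longrightarrow> I j a \<Longrightarrow>
       measure_pmf.prob (trip n (fst a)) {w. \<not> snd (snd w) ! i} \<le> q"
    and q: "0 \<le> q" and lam: "0 \<le> lam" and M: "M = 1 + q * (exp lam - 1)"
  shows "j \<le> J \<Longrightarrow> (\<integral>\<^sup>+a. Psi I i lam M j a \<partial>arun \<epsilon> n L (st + j)) \<le> 1"
proof (induction j)
  case 0
  have "(\<integral>\<^sup>+a. Psi I i lam M 0 a \<partial>arun \<epsilon> n L (st + 0)) \<le> (\<integral>\<^sup>+a. 1 \<partial>arun \<epsilon> n L (st + 0))"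
    by (intro nn_integral_mono) (simp add: Psi_def lastk_0 zeros_def)
  then show ?case by simp
next
  case (Suc j)
  have "(\<integral>\<^sup>+a. Psi I i lam M (Suc j) a \<partial>arun \<epsilon> n L (st + Suc j)) =
     (\<integral>\<^sup>+a. (\<integral>\<^sup>+w. Psi I i lam M (Suc j) (anx \<epsilon> n L a w) \<partial>trip n (fst a)) \<partial>arun \<epsilon> n L (st + j))"
    by (simp add: astep_def)
  also have "\<dots> \<le> (\<integral>\<^sup>+a. Psi I i lam M j a \<partial>arun \<epsilon> n L (st + j))"
  proof (intro nn_integral_mono_AE AE_pmfI)
    fix a assume a: "a \<in> set_pmf (arun \<epsilon> n L (st + j))"
    have jl: "j < J" and jle: "j \<le> J" using Suc.prems by auto
    show "(\<integral>\<^sup>+w. Psi I i lam M (Suc j) (anx \<epsilon> n L a w) \<partial>trip n (fst a)) \<le> Psi I i lam M j a"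
      apply (rule psi_step[OF _ _ q lam M])
      using H1[OF jl] H2[OF jle a] by auto
  qed
  also have "\<dots> \<le> 1" using Suc by simp
  finally show ?case .
qed

lemma window_bound:
  assumes H1: "\<And>a w j. j < J \<Longrightarrow> w \<in> set_pmf (trip n (fst a)) \<Longrightarrow> I (Suc j) (anx \<epsilon> n L a w) \<Longrightarrow>
       I j a \<and> hist_of (fst (anx \<epsilon> n L a w)) i = hist_of (fst a) i @ [snd (snd w) ! i]"
    and H2: "\<And>t a j. j \<le> J \<Longrightarrow> a \<in> set_pmf (arun \<epsilon> n L t) \<Longrightarrow> I j a \<Longrightarrow>
       measure_pmf.prob (trip n (fst a)) {w. \<not> snd (snd w) ! i} \<le> q"
    and q: "0 \<le> q" and lam: "0 \<le> lam" and M: "M = 1 + q * (exp lam - 1)"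
  shows "emeasure (atr \<epsilon> n L (st + J))
     {p. I J (fst p) \<and> thr \<le> real (zeros (lastk J (hist_of (fst (fst p)) i) @ [snd (snd (snd p)) ! i]))}
     \<le> ennreal (M ^ Suc J / exp (lam * thr))"
proof -
  have M1: "1 \<le> M" using M q lam by (simp add: mult_nonneg_nonneg)
  define c where "c = M ^ Suc J / exp (lam * thr)"
  have c0: "0 \<le> c" using M1 by (simp add: c_def)
  let ?S = "{p. I J (fst p) \<and> thr \<le> real (zeros (lastk J (hist_of (fst (fst p)) i) @ [snd (snd (snd p)) ! i]))}"
  have inner: "emeasure (trip n (fst a)) {w. (a, w) \<in> ?S} \<le> ennreal c * Psi I i lam M J a"
    if a: "a \<in> set_pmf (arun \<epsilon> n L (st + J))" for a
  proof (cases "I J a")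
    case False then show ?thesis by simp
  next
    case True
    define H where "H = hist_of (fst a) i"
    define E1 where "E1 = exp (lam * real (zeros (lastk J H)))"
    have "emeasure (trip n (fst a)) {w. (a, w) \<in> ?S} =
        (\<integral>\<^sup>+w. indicator {w. thr \<le> real (zeros (lastk J H @ [snd (snd w) ! i]))} w \<partial>trip n (fst a))"
      using True by (simp add: H_def)
    also have "\<dots> \<le> (\<integral>\<^sup>+w. ennreal (exp (- lam * thr) * E1) * ennreal (exp (lam * (if snd (snd w) ! i then 0 else 1))) \<partial>trip n (fst a))"
    proof (intro nn_integral_mono)
      fix w
      show "indicator {w. thr \<le> real (zeros (lastk J H @ [snd (snd w) ! i]))} w \<le>
          ennreal (exp (- lam * thr) * E1) * ennreal (exp (lam * (if snd (snd w) ! i then 0 else 1)))"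
      proof (cases "thr \<le> real (zeros (lastk J H @ [snd (snd w) ! i]))")
        case False then show ?thesis by simp
      next
        case True
        have "exp (- lam * thr) * E1 * exp (lam * (if snd (snd w) ! i then 0 else 1))
            = exp (lam * (real (zeros (lastk J H @ [snd (snd w) ! i])) - thr))"
          by (simp add: E1_def zeros_snoc exp_add[symmetric] algebra_simps)
        also have "\<dots> \<ge> 1" using True lam by simp
        finally show ?thesis using True by (simp add: ennreal_mult[symmetric] E1_def)
      qed
    qed
    also have "\<dots> = ennreal (exp (- lam * thr) * E1) * (\<integral>\<^sup>+w. ennreal (exp (lam * (if snd (snd w) ! i then 0 else 1))) \<partial>trip n (fst a))"
      by (rule nn_integral_cmult) auto
    also have "\<dots> \<le> ennreal (exp (- lam * thr) * E1) * ennreal M"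
      using mgf_step[OF H2[OF _ a True] lam] M by (intro mult_left_mono) auto
    also have "\<dots> = ennreal c * Psi I i lam M J a"
    proof -
      have "exp (- lam * thr) * E1 * M = c * (E1 / M ^ J)"
        using M1 by (simp add: c_def exp_minus field_simps)
      then show ?thesis using True M1 c0 by (simp add: Psi_def E1_def H_def ennreal_mult[symmetric] mult.assoc)
    qed
    finally show ?thesis .
  qed
  have "emeasure (atr \<epsilon> n L (st + J)) ?S = (\<integral>\<^sup>+a. emeasure (trip n (fst a)) {w. (a, w) \<in> ?S} \<partial>arun \<epsilon> n L (st + J))"
    by (simp add: atr_def emeasure_bind_pmf vimage_def)
  also have "\<dots> \<le> (\<integral>\<^sup>+a. ennreal c * Psi I i lam M J a \<partial>arun \<epsilon> n L (st + J))"
    using inner by (intro nn_integral_mono_AE AE_pmfI) auto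
  also have "\<dots> = ennreal c * (\<integral>\<^sup>+a. Psi I i lam M J a \<partial>arun \<epsilon> n L (st + J))"
    by (rule nn_integral_cmult) auto
  also have "\<dots> \<le> ennreal c * 1"
    using supermart[OF H1 H2 q lam M, where j=J and st=st] by (intro mult_left_mono) auto
  finally show ?thesis by (simp add: c_def)
qed


lemma mgf_pow_bound:
  fixes q l :: real and k :: nat
  assumes "0 \<le> q" "0 \<le> l" "l \<le> 1"
  shows "(1 + q * (exp l - 1)) ^ k \<le> exp (k * q * (l + l^2))"
proof -
  have b1: "0 \<le> 1 + q * (exp l - 1)" using assms by (simp add: mult_nonneg_nonneg)
  have "1 + q * (exp l - 1) \<le> exp (q * (exp l - 1))" using exp_ge_add_one_self by simp
  also have "\<dots> \<le> exp (q * (l + l^2))"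
    using exp_bound[of l] assms by (simp add: mult_left_mono)
  finally have "(1 + q * (exp l - 1)) ^ k \<le> exp (q * (l + l^2)) ^ k"
    using b1 by (intro power_mono) auto
  also have "\<dots> = exp (k * (q * (l + l^2)))" by (simp add: exp_of_nat_mult)
  finally show ?thesis by (simp add: mult.assoc)
qed

lemma down_bound:
  fixes q \<mu> s \<epsilon> lnn :: real and k :: nat
  assumes q: "0 \<le> q" and mu: "\<mu> = k * q" "0 < \<mu>" and e: "\<epsilon> \<ge> 4/3" and lnn: "0 \<le> lnn"
    and s: "s = \<epsilon> * max (sqrt (\<mu> * lnn)) lnn"
  shows "\<exists>l. 0 \<le> l \<and> (1 + q * (exp l - 1)) ^ k / exp (l * (\<mu> + s)) \<le> exp (- (\<epsilon>/3) * lnn)"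
proof -
  have key: "(1 + q * (exp l - 1)) ^ k / exp (l * (\<mu> + s)) \<le> exp (\<mu> * l^2 - l * s)"
    if "0 \<le> l" "l \<le> 1" for l
  proof -
    have "(1 + q * (exp l - 1)) ^ k \<le> exp (\<mu> * (l + l^2))"
      using mgf_pow_bound[OF q that, of k] mu by (simp add: mult.assoc)
    then have "(1 + q * (exp l - 1)) ^ k / exp (l * (\<mu> + s)) \<le> exp (\<mu> * (l + l^2)) / exp (l * (\<mu> + s))"
      by (simp add: divide_right_mono)
    also have "\<dots> = exp (\<mu> * l^2 - l * s)" by (simp add: exp_diff[symmetric] algebra_simps)
    finally show ?thesis .
  qed
  have s0: "s \<ge> \<epsilon> * lnn" using s e lnn by (simp add: mult_left_mono)
  have s1: "s \<ge> \<epsilon> * sqrt (\<mu> * lnn)" using s e by (simp add: mult_left_mono)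
  show ?thesis
  proof (cases "s \<ge> 2 * \<mu>")
    case True
    have "\<mu> * 1^2 - 1 * s \<le> - (\<epsilon>/3) * lnn"
    proof -
      have "\<mu> - s \<le> - s / 2" using True by simp
      also have "\<dots> \<le> - (\<epsilon> * lnn) / 2" using s0 by simp
      also have "\<dots> \<le> - (\<epsilon>/3) * lnn" using e lnn by (simp add: mult_nonneg_nonneg)
      finally show ?thesis by simp
    qed
    then show ?thesis using key[of 1] by (intro exI[of _ 1]) (auto intro: order_trans)
  next
    case False
    define l where "l = s / (2 * \<mu>)"
    have s_nn: "0 \<le> s" using s e lnn by (simp add: mult_nonneg_nonneg)
    have l0: "0 \<le> l" using s_nn mu by (simp add: l_def)
    have l1: "l \<le> 1" using False mu by (simp add: l_def)
    have "\<mu> * l^2 - l * s = - (s^2) / (4 * \<mu>)" using mu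
      by (simp add: l_def power2_eq_square field_simps)
    also have "\<dots> \<le> - (\<epsilon>^2 * (\<mu> * lnn)) / (4 * \<mu>)"
    proof -
      have "(\<epsilon> * sqrt (\<mu> * lnn))^2 \<le> s^2"
        using s1 e mu lnn by (intro power_mono) auto
      then have "\<epsilon>^2 * (\<mu> * lnn) \<le> s^2" using mu lnn by (simp add: power_mult_distrib)
      then have "\<epsilon>^2 * (\<mu> * lnn) / (4 * \<mu>) \<le> s^2 / (4 * \<mu>)"
        using mu(2) by (intro divide_right_mono) auto
      then show ?thesis by simp
    qed
    also have "\<dots> = - (\<epsilon>^2/4) * lnn" using mu(2) by (simp add: field_simps)
    also have "\<dots> \<le> - (\<epsilon>/3) * lnn"
    proof -
      have "\<epsilon> * (4/3) \<le> \<epsilon> * \<epsilon>" using e by (intro mult_left_mono) auto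
      then have "\<epsilon>/3 \<le> \<epsilon>^2/4" by (simp add: power2_eq_square)
      from mult_right_mono[OF this lnn] show ?thesis by linarith
    qed
    finally have "\<mu> * l^2 - l * s \<le> - (\<epsilon>/3) * lnn" .
    then show ?thesis using key[OF l0 l1] l0 by (intro exI[of _ l]) (auto intro: order_trans)
  qed
qed

lemma stall_bound:
  fixes \<delta> s \<epsilon> lnn :: real and L :: nat
  assumes d: "0 < \<delta>" "\<delta> \<le> 1/2" and e: "\<epsilon> > 0" and lnn: "0 \<le> lnn"
    and s: "s = \<epsilon> * max (sqrt (L/2 * lnn)) lnn"
    and L: "L \<ge> (2 * \<epsilon>^2 + 8 * \<epsilon>) * lnn / \<delta>^2"
  shows "(1 + (1/2 - \<delta>) * (exp (\<delta>/2) - 1)) ^ L / exp (\<delta>/2 * (L/2 - s)) \<le> exp (- \<epsilon> * lnn)"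
proof -
  define l where "l = \<delta>/2"
  define LL where "LL = real L"
  have LL0: "0 \<le> LL" by (simp add: LL_def)
  have l0: "0 \<le> l" "l \<le> 1" using d by (auto simp: l_def)
  have q0: "0 \<le> 1/2 - \<delta>" using d by simp
  have d2: "0 < \<delta>^2" using d by simp
  have hL: "(2 * \<epsilon>^2 + 8 * \<epsilon>) * lnn \<le> LL * \<delta>^2"
    using L d2 unfolding LL_def by (simp add: pos_divide_le_eq)
  have e2: "0 \<le> \<epsilon>^2" by simp
  have hA: "8 * \<epsilon> * lnn \<le> LL * \<delta>^2"
  proof -
    have "0 \<le> 2 * \<epsilon>^2 * lnn" using lnn by simp
    then show ?thesis using hL by (simp add: algebra_simps)
  qed
  have hB: "2 * \<epsilon>^2 * lnn \<le> LL * \<delta>^2"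
  proof -
    have "0 \<le> 8 * \<epsilon> * lnn" using lnn e by simp
    then show ?thesis using hL by (simp add: algebra_simps)
  qed
  have dd: "LL * \<delta>^2 \<le> LL * \<delta> / 2"
  proof -
    have "\<delta> * \<delta> \<le> \<delta> * (1/2)" using d by (intro mult_left_mono) auto
    then have "LL * (\<delta> * \<delta>) \<le> LL * (\<delta> * (1/2))" by (rule mult_left_mono[OF _ LL0])
    then show ?thesis by (simp add: power2_eq_square)
  qed
  have c1: "\<epsilon> * lnn \<le> LL * \<delta> / 2"
  proof -
    have "0 \<le> \<epsilon> * lnn" using e lnn by simp
    then show ?thesis using hA dd by linarith
  qed
  have c2: "\<epsilon> * sqrt (LL/2 * lnn) \<le> LL * \<delta> / 2"
  proof -
    have sq0: "0 \<le> LL/2 * lnn" using LL0 lnn by simp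
    have sqe: "(sqrt (LL/2 * lnn))^2 = LL/2 * lnn" using sq0 by (rule real_sqrt_pow2)
    have "(\<epsilon> * sqrt (LL/2 * lnn))^2 = \<epsilon>^2 * (LL/2 * lnn)" unfolding power_mult_distrib sqe ..
    also have "\<dots> = (LL/4) * (2 * \<epsilon>^2 * lnn)" by (simp add: algebra_simps)
    also have "\<dots> \<le> (LL/4) * (LL * \<delta>^2)" using LL0 by (intro mult_left_mono[OF hB]) auto
    also have "\<dots> = (LL * \<delta> / 2)^2" by (simp add: power2_eq_square algebra_simps)
    finally have "(\<epsilon> * sqrt (LL/2 * lnn))^2 \<le> (LL * \<delta> / 2)^2" .
    moreover have "0 \<le> LL * \<delta> / 2" using d LL0 by simp
    ultimately show ?thesis by (rule power2_le_imp_le)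
  qed
  have sq: "s \<le> LL * \<delta> / 2" using c1 c2 s unfolding LL_def by (auto simp: max_def)
  have "(1 + (1/2 - \<delta>) * (exp l - 1)) ^ L \<le> exp (L * (1/2 - \<delta>) * (l + l^2))"
    by (rule mgf_pow_bound[OF q0 l0])
  then have "(1 + (1/2 - \<delta>) * (exp l - 1)) ^ L / exp (l * (LL/2 - s)) \<le>
       exp (LL * (1/2 - \<delta>) * (l + l^2)) / exp (l * (LL/2 - s))"
    unfolding LL_def by (simp add: divide_right_mono)
  also have "\<dots> = exp (LL * (1/2 - \<delta>) * (l + l^2) - l * (LL/2 - s))" by (simp add: exp_diff)
  also have "\<dots> \<le> exp (- \<epsilon> * lnn)"
  proof -
    have "LL * (1/2 - \<delta>) * (l + l^2) - l * (LL/2 - s) = - l * (LL * \<delta> - s) + LL * (1/2 - \<delta>) * l^2"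
      by (simp add: algebra_simps)
    also have "\<dots> \<le> - l * (LL * \<delta> / 2) + LL * (1/2) * l^2"
    proof -
      have "l * (LL * \<delta> / 2) \<le> l * (LL * \<delta> - s)" using sq l0 by (intro mult_left_mono) auto
      moreover have "LL * (1/2 - \<delta>) * l^2 \<le> LL * (1/2) * l^2"
        using d LL0 by (intro mult_right_mono mult_left_mono) auto
      ultimately show ?thesis by linarith
    qed
    also have "\<dots> = - LL * \<delta>^2 / 8" by (simp add: l_def power2_eq_square algebra_simps)
    also have "\<dots> \<le> - \<epsilon> * lnn" using hA by simp
    finally show ?thesis by simp
  qed
  finally show ?thesis by (simp add: l_def LL_def)
qed


lemma new_tau_cases: "new_tau \<epsilon> n p H = p \<or> new_tau \<epsilon> n p H = 1 - 1 / real n \<or> new_tau \<epsilon> n p H = 1 / real n"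
  by (cases "sig \<epsilon> n p H") (auto simp: new_tau_def)

lemma anx_simps:
  "fst (anx \<epsilon> n L a w) = nxt \<epsilon> n (fst a) (fst w) (fst (snd w)) (snd (snd w))"
  "fst (snd (anx \<epsilon> n L a w)) = (fst (snd a) \<or> dcr n (fst a) (fst (anx \<epsilon> n L a w)) \<or>
      (0 < Qc n (fst a) \<and> L \<le> Suc (snd (snd a)) \<and> \<not> chg n (fst a) (fst (anx \<epsilon> n L a w))))"
  "snd (snd (anx \<epsilon> n L a w)) = (if chg n (fst a) (fst (anx \<epsilon> n L a w)) then 0 else Suc (snd (snd a)))"
  by (simp_all add: anx_def Let_def)

lemma set_arun_Suc: "a' \<in> set_pmf (arun \<epsilon> n L (Suc t)) \<Longrightarrow>
  \<exists>a\<in>set_pmf (arun \<epsilon> n L t). \<exists>w\<in>set_pmf (trip n (fst a)). a' = anx \<epsilon> n L a w"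
  by (simp add: astep_def image_iff)

definition Inv :: "nat \<Rightarrow> nat \<Rightarrow> nat \<Rightarrow> ast \<Rightarrow> bool" where
  "Inv n L t a \<longleftrightarrow> iter_of (fst a) = t
     \<and> (\<forall>k<n. snd (snd a) \<le> length (hist_of (fst a) k) \<and> length (hist_of (fst a) k) \<le> t)
     \<and> (\<not> fst (snd a) \<longrightarrow> (\<forall>k<n. okp (1 / real n) (tau_of (fst a) k)))
     \<and> (\<not> fst (snd a) \<longrightarrow> 0 < Qc n (fst a) \<longrightarrow>
           snd (snd a) + 1 \<le> L \<and> t \<le> L * (n - Qc n (fst a)) + snd (snd a))
     \<and> (\<forall>r. found_of (fst a) = Some r \<longrightarrow> r \<le> 2 * t)"

lemma Qc_le: "Qc n s \<le> n"
proof -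
  have "{i. i < n \<and> tau_of s i = 1/2} \<subseteq> {..<n}" by auto
  then show ?thesis unfolding Qc_def by (metis card_lessThan card_mono finite_lessThan)
qed

lemma init_Inv: "1 \<le> L \<Longrightarrow> Inv n L 0 (init_state, False, 0)"
  by (simp add: Inv_def init_state_def iter_of_def hist_of_def tau_of_def okp_def found_of_def)

lemma Inv_step:
  assumes n: "4 \<le> n" and L: "1 \<le> L" and I: "Inv n L t a"
  shows "Inv n L (Suc t) (anx \<epsilon> n L a w)"
proof -
  define s where "s = fst a"
  define s' where "s' = fst (anx \<epsilon> n L a w)"
  define B where "B = fst (snd a)"
  define c where "c = snd (snd a)"
  define e where "e = 1 / real n"
  have e: "0 < e" "e \<le> 1/4" using n by (auto simp: e_def field_simps)
  have s'_def2: "s' = nxt \<epsilon> n s (fst w) (fst (snd w)) (snd (snd w))" by (simp add: s'_def s_def anx_simps)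
  have tau': "\<And>k. tau_of s' k = new_tau \<epsilon> n (tau_of s k) (hist_of s k @ [snd (snd w) ! k])"
    by (simp add: s'_def2 tau_nxt)
  have tcases: "\<And>k. tau_of s' k = tau_of s k \<or> tau_of s' k = 1 - e \<or> tau_of s' k = e"
    using tau' new_tau_cases by (simp add: e_def)
  have hist': "\<And>k. hist_of s' k = (if tau_of s' k \<noteq> tau_of s k then [] else hist_of s k @ [snd (snd w) ! k])"
    by (simp add: s'_def2 hist_nxt tau_nxt)
  have B': "fst (snd (anx \<epsilon> n L a w)) = (B \<or> dcr n s s' \<or> (0 < Qc n s \<and> L \<le> Suc c \<and> \<not> chg n s s'))"
    by (simp add: anx_simps B_def s_def s'_def c_def)
  have c': "snd (snd (anx \<epsilon> n L a w)) = (if chg n s s' then 0 else Suc c)"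
    by (simp add: anx_simps s_def s'_def c_def)
  have it: "iter_of s = t" and lens: "\<forall>k<n. c \<le> length (hist_of s k) \<and> length (hist_of s k) \<le> t"
    and ok: "\<not> B \<longrightarrow> (\<forall>k<n. okp e (tau_of s k))"
    and prog: "\<not> B \<longrightarrow> 0 < Qc n s \<longrightarrow> c + 1 \<le> L \<and> t \<le> L * (n - Qc n s) + c"
    and fnd: "\<forall>r. found_of s = Some r \<longrightarrow> r \<le> 2 * t"
    using I by (auto simp: Inv_def s_def B_def c_def e_def)
  have P1: "iter_of s' = Suc t" using it by (simp add: s'_def2 iter_nxt)
  have P2: "\<forall>k<n. snd (snd (anx \<epsilon> n L a w)) \<le> length (hist_of s' k) \<and> length (hist_of s' k) \<le> Suc t"
  proof (intro allI impI)
    fix k assume k: "k < n"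
    show "snd (snd (anx \<epsilon> n L a w)) \<le> length (hist_of s' k) \<and> length (hist_of s' k) \<le> Suc t"
    proof (cases "tau_of s' k \<noteq> tau_of s k")
      case True
      then have "chg n s s'" using k by (auto simp: chg_def)
      then show ?thesis using c' hist' True by simp
    next
      case False
      then show ?thesis using c' hist' lens k by auto
    qed
  qed
  have P5: "\<forall>r. found_of s' = Some r \<longrightarrow> r \<le> 2 * Suc t"
    using fnd it by (auto simp: s'_def2 found_nxt split: option.splits if_splits)
  have P34: "\<not> fst (snd (anx \<epsilon> n L a w)) \<longrightarrow> (\<forall>k<n. okp e (tau_of s' k)) \<and>
      (0 < Qc n s' \<longrightarrow> snd (snd (anx \<epsilon> n L a w)) + 1 \<le> L \<and> Suc t \<le> L * (n - Qc n s') + snd (snd (anx \<epsilon> n L a w)))"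
  proof
    assume nB': "\<not> fst (snd (anx \<epsilon> n L a w))"
    then have nB: "\<not> B" and nd: "\<not> dcr n s s'" and nst: "\<not> (0 < Qc n s \<and> L \<le> Suc c \<and> \<not> chg n s s')"
      using B' by auto
    have oks: "\<forall>k<n. okp e (tau_of s k)" using ok nB by simp
    have ge: "tau_of s k \<le> tau_of s' k" if k: "k < n" for k
    proof -
      have "\<not> (tau_of s' k < tau_of s k)" using nd k unfolding dcr_def by blast
      then show ?thesis by simp
    qed
    have ok': "\<forall>k<n. okp e (tau_of s' k)"
    proof (intro allI impI)
      fix k assume k: "k < n"
      have "okp e (tau_of s k)" using oks k by simp
      then show "okp e (tau_of s' k)" using tcases[of k] ge[OF k] e by (auto simp: okp_def)
    qed
    have sub: "{k. k < n \<and> tau_of s' k = 1/2} \<subseteq> {k. k < n \<and> tau_of s k = 1/2}"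
    proof
      fix k assume "k \<in> {k. k < n \<and> tau_of s' k = 1/2}"
      then have k: "k < n" "tau_of s' k = 1/2" by auto
      then show "k \<in> {k. k < n \<and> tau_of s k = 1/2}" using tcases[of k] e by auto
    qed
    have fin: "finite {k. k < n \<and> tau_of s k = 1/2}" by simp
    have Qle: "Qc n s' \<le> Qc n s" unfolding Qc_def by (rule card_mono[OF fin sub])
    have Qlt: "chg n s s' \<Longrightarrow> Qc n s' < Qc n s"
    proof -
      assume "chg n s s'"
      then obtain k where k: "k < n" "tau_of s' k \<noteq> tau_of s k" by (auto simp: chg_def)
      have "okp e (tau_of s k)" using oks k by simp
      then have "tau_of s k = 1/2" "tau_of s' k \<noteq> 1/2"
        using k tcases[of k] ge[OF k(1)] e by (auto simp: okp_def)
      then have "k \<in> {k. k < n \<and> tau_of s k = 1/2}" "k \<notin> {k. k < n \<and> tau_of s' k = 1/2}" using k by auto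
      then have "{k. k < n \<and> tau_of s' k = 1/2} \<subset> {k. k < n \<and> tau_of s k = 1/2}" using sub by blast
      then show ?thesis unfolding Qc_def by (rule psubset_card_mono[OF fin])
    qed
    have Q0: "\<not> chg n s s' \<Longrightarrow> Qc n s' = Qc n s"
    proof -
      assume "\<not> chg n s s'"
      then have "\<forall>k<n. tau_of s' k = tau_of s k" by (auto simp: chg_def)
      then have "{k. k < n \<and> tau_of s' k = 1/2} = {k. k < n \<and> tau_of s k = 1/2}" by auto
      then show ?thesis by (simp add: Qc_def)
    qed
    have "0 < Qc n s' \<longrightarrow> snd (snd (anx \<epsilon> n L a w)) + 1 \<le> L \<and> Suc t \<le> L * (n - Qc n s') + snd (snd (anx \<epsilon> n L a w))"
    proof
      assume Q': "0 < Qc n s'"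
      then have Qp: "0 < Qc n s" using Qle by simp
      then have pr: "c + 1 \<le> L" "t \<le> L * (n - Qc n s) + c" using prog nB by auto
      have Qn: "Qc n s \<le> n" by (rule Qc_le)
      show "snd (snd (anx \<epsilon> n L a w)) + 1 \<le> L \<and> Suc t \<le> L * (n - Qc n s') + snd (snd (anx \<epsilon> n L a w))"
      proof (cases "chg n s s'")
        case True
        have "Qc n s' + 1 \<le> Qc n s" using Qlt[OF True] by simp
        then have "n - Qc n s + 1 \<le> n - Qc n s'" using Qn by simp
        then have "L * (n - Qc n s + 1) \<le> L * (n - Qc n s')" by (rule mult_left_mono) simp
        then have "L * (n - Qc n s) + L \<le> L * (n - Qc n s')" by (simp add: algebra_simps)
        then show ?thesis using c' True pr L by simp
      next
        case False
        then have "\<not> L \<le> Suc c" using nst Qp by simp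
        then show ?thesis using c' False pr Q0[OF False] by simp
      qed
    qed
    then show "(\<forall>k<n. okp e (tau_of s' k)) \<and>
      (0 < Qc n s' \<longrightarrow> snd (snd (anx \<epsilon> n L a w)) + 1 \<le> L \<and> Suc t \<le> L * (n - Qc n s') + snd (snd (anx \<epsilon> n L a w)))"
      using ok' by simp
  qed
  show ?thesis unfolding Inv_def using P1 P2 P34 P5 by (simp add: s'_def e_def)
qed

lemma Inv_arun: "4 \<le> n \<Longrightarrow> 1 \<le> L \<Longrightarrow> a \<in> set_pmf (arun \<epsilon> n L t) \<Longrightarrow> Inv n L t a"
proof (induction t arbitrary: a)
  case 0 then show ?case using init_Inv by simp
next
  case (Suc t)
  then obtain a0 w where "a0 \<in> set_pmf (arun \<epsilon> n L t)" "a = anx \<epsilon> n L a0 w"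
    using set_arun_Suc by blast
  then show ?case using Suc Inv_step by blast
qed


lemma trip_z: "map_pmf (\<lambda>w. snd (snd w)) (trip n s) =
  bind_pmf (sample_ind n (tau_of s)) (\<lambda>x. bind_pmf (sample_ind n (tau_of s)) (\<lambda>y. winner n x y))"
  by (simp add: trip_def map_bind_pmf map_pmf_comp)

lemma prob_trip_notz:
  assumes "even n" "i < n" "\<forall>k<n. 0 \<le> tau_of s k \<and> tau_of s k \<le> 1"
  shows "measure_pmf.prob (trip n s) {w. \<not> snd (snd w) ! i} = 1 - beta (map (tau_of s) [0..<n]) i"
proof -
  have "measure_pmf.prob (trip n s) {w. \<not> snd (snd w) ! i} =
        measure_pmf.prob (map_pmf (\<lambda>w. snd (snd w)) (trip n s)) {z. \<not> z ! i}"
    by (simp add: vimage_def)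
  also have "\<dots> = measure_pmf.prob (W (map (tau_of s) [0..<n])) {z. \<not> z ! i}"
    by (simp only: trip_z step_W[OF assms(1)])
  also have "\<dots> = 1 - measure_pmf.prob (W (map (tau_of s) [0..<n])) {z. z ! i}"
  proof -
    have "{z. \<not> z ! i} = space (measure_pmf (W (map (tau_of s) [0..<n]))) - {z. z ! i}" by auto
    then show ?thesis using measure_pmf.prob_compl[of "{z. z ! i}" "W (map (tau_of s) [0..<n])"] by simp
  qed
  also have "\<dots> = 1 - beta (map (tau_of s) [0..<n]) i"
    using assms by (subst prob_W_bit) auto
  finally show ?thesis .
qed

lemma okp_01: "0 < e \<Longrightarrow> e \<le> 1/4 \<Longrightarrow> okp e p \<Longrightarrow> 0 \<le> p \<and> p \<le> 1"
  by (auto simp: okp_def)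

lemma pow_quarter:
  assumes "even n" "2 \<le> n"
  shows "(1 - 1 / real n) ^ n \<ge> 1/4"
proof -
  obtain k where k: "n = 2 * k" using assms by auto
  have "-1 \<le> - 1 / real n" using assms by simp
  from Bernoulli_inequality[OF this, of k]
  have "1 + real k * (- 1 / real n) \<le> (1 + - 1 / real n) ^ k" .
  moreover have "1 + real k * (- 1 / real n) = 1/2" using k assms by (simp add: field_simps)
  ultimately have h: "1/2 \<le> (1 - 1 / real n) ^ k" by simp
  define x where "x = 1 - 1 / real n"
  have "(1/2)^2 \<le> (x ^ k)^2" using h unfolding x_def by (intro power_mono) auto
  moreover have "(x ^ k)^2 = x ^ n" unfolding k by (simp add: power_mult[symmetric] mult.commute)
  ultimately show ?thesis unfolding x_def by (simp add: power2_eq_square)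
qed

lemma H2_down:
  assumes n: "4 \<le> n" "even n" and L: "1 \<le> L" and a: "a \<in> set_pmf (arun \<epsilon> n L t)"
    and nB: "\<not> fst (snd a)" and i: "i < n" and p: "tau_of (fst a) i = p"
  shows "measure_pmf.prob (trip n (fst a)) {w. \<not> snd (snd w) ! i} \<le> 1 - p"
proof -
  define e where "e = 1 / real n"
  have e: "0 < e" "e \<le> 1/4" using n by (auto simp: e_def field_simps)
  have ok: "\<forall>k<n. okp e (tau_of (fst a) k)" using Inv_arun[OF n(1) L a] nB by (simp add: Inv_def e_def)
  have b01: "\<forall>k<n. 0 \<le> tau_of (fst a) k \<and> tau_of (fst a) k \<le> 1" using ok okp_01[OF e] by blast
  have "beta (map (tau_of (fst a)) [0..<n]) i \<ge> map (tau_of (fst a)) [0..<n] ! i"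
    using ok i n e by (intro beta_ge[of _ e]) auto
  then show ?thesis using prob_trip_notz[OF n(2) i b01] i p by simp
qed

definition fh :: "nat \<Rightarrow> state \<Rightarrow> nat option" where
  "fh n s = (if \<exists>k<n. tau_of s k = 1/2 then Some (LEAST k. k < n \<and> tau_of s k = 1/2) else None)"

lemma fh_Some: "fh n s = Some i \<Longrightarrow> i < n \<and> tau_of s i = 1/2 \<and> (\<forall>k<i. tau_of s k \<noteq> 1/2)"
proof -
  assume h: "fh n s = Some i"
  then have ex: "\<exists>k<n. tau_of s k = 1/2" and i: "i = (LEAST k. k < n \<and> tau_of s k = 1/2)"
    by (auto simp: fh_def split: if_splits)
  from ex obtain k0 where k0: "k0 < n \<and> tau_of s k0 = 1/2" by blast
  have "i < n \<and> tau_of s i = 1/2" unfolding i by (rule LeastI[of _ k0]) (rule k0)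
  moreover have "\<forall>k<i. tau_of s k \<noteq> 1/2"
  proof (intro allI impI)
    fix k assume "k < i"
    then have "\<not> (k < n \<and> tau_of s k = 1/2)" unfolding i by (rule not_less_Least)
    moreover have "k < n" using \<open>k < i\<close> calculation \<open>i < n \<and> tau_of s i = 1/2\<close> by simp
    ultimately show "tau_of s k \<noteq> 1/2" by simp
  qed
  ultimately show ?thesis by simp
qed

lemma fh_Qc: "0 < Qc n s \<Longrightarrow> \<exists>i. fh n s = Some i"
proof -
  assume "0 < Qc n s"
  then have "{i. i < n \<and> tau_of s i = 1/2} \<noteq> {}" unfolding Qc_def by (metis card.empty less_irrefl)
  then show ?thesis by (auto simp: fh_def)
qed

lemma fh_cong: "(\<forall>k<n. tau_of s' k = tau_of s k) \<Longrightarrow> fh n s' = fh n s"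
proof -
  assume h: "\<forall>k<n. tau_of s' k = tau_of s k"
  then have "(\<lambda>k. k < n \<and> tau_of s' k = 1/2) = (\<lambda>k. k < n \<and> tau_of s k = 1/2)" by auto
  then show ?thesis unfolding fh_def by (metis h)
qed

lemma H2_stall:
  assumes n: "4 \<le> n" "even n" and L: "1 \<le> L" and a: "a \<in> set_pmf (arun \<epsilon> n L t)"
    and nB: "\<not> fst (snd a)" and f: "fh n (fst a) = Some i"
  shows "measure_pmf.prob (trip n (fst a)) {w. \<not> snd (snd w) ! i} \<le> 1/2 - 1/256"
proof -
  define e where "e = 1 / real n"
  have e: "0 < e" "e \<le> 1/4" using n by (auto simp: e_def field_simps)
  have ok: "\<forall>k<n. okp e (tau_of (fst a) k)" using Inv_arun[OF n(1) L a] nB by (simp add: Inv_def e_def)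
  have b01: "\<forall>k<n. 0 \<le> tau_of (fst a) k \<and> tau_of (fst a) k \<le> 1" using ok okp_01[OF e] by blast
  have fi: "i < n" "tau_of (fst a) i = 1/2" "\<forall>k<i. tau_of (fst a) k \<noteq> 1/2" using fh_Some[OF f] by auto
  have pre: "\<forall>k < 2 * (i div 2). map (tau_of (fst a)) [0..<n] ! k = 1 - e"
  proof (intro allI impI)
    fix k assume k: "k < 2 * (i div 2)"
    then have ki: "k < i" by linarith
    then have "okp e (tau_of (fst a) k)" "tau_of (fst a) k \<noteq> 1/2" using ok fi by auto
    then show "map (tau_of (fst a)) [0..<n] ! k = 1 - e" using ki fi by (auto simp: okp_def)
  qed
  have "beta (map (tau_of (fst a)) [0..<n]) i \<ge> 1/2 + (1 - e)^(4 * (i div 2)) / 16"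
    using ok fi pre e n(2) by (intro beta_crit) auto
  moreover have "(1 - e)^(4 * (i div 2)) \<ge> 1/16"
  proof -
    have "(1 - e)^(2 * n) \<le> (1 - e)^(4 * (i div 2))"
      using fi e by (intro power_decreasing) auto
    moreover have "(1 - e)^(2 * n) = ((1 - e)^n)^2" by (simp add: power_mult[symmetric] mult.commute)
    moreover have "((1 - e)^n)^2 \<ge> (1/4)^2"
      using pow_quarter[OF n(2)] n by (intro power_mono) (auto simp: e_def)
    ultimately show ?thesis by (simp add: power2_eq_square)
  qed
  ultimately have "beta (map (tau_of (fst a)) [0..<n]) i \<ge> 1/2 + 1/256" by simp
  then show ?thesis using prob_trip_notz[OF n(2) fi(1) b01] by simp
qed


lemma sig_Down: "sig \<epsilon> n p H = Down \<Longrightarrow>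
   \<exists>m::nat. 2^m \<le> length H \<and> real (zeros (lastk (2^m) H)) \<ge> 2^m * (1 - p) + sfun \<epsilon> n (2^m * (1 - p))"
  unfolding sig_def by (auto split: if_splits)

lemma sig_Up: "p = 1/2 \<Longrightarrow> 2^m \<le> length H \<Longrightarrow> real (ones (lastk (2^m) H)) \<ge> 2^m * p + sfun \<epsilon> n (2^m * p)
   \<Longrightarrow> sig \<epsilon> n p H = Up"
  unfolding sig_def by auto

lemma hist_anx_nonempty:
  assumes "hist_of (fst (anx \<epsilon> n L a w)) i \<noteq> []"
  shows "tau_of (fst (anx \<epsilon> n L a w)) i = tau_of (fst a) i \<and>
         hist_of (fst (anx \<epsilon> n L a w)) i = hist_of (fst a) i @ [snd (snd w) ! i]"
  using assms by (simp add: anx_simps hist_nxt tau_nxt split: if_splits)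

lemma lastk_pow: "lastk (2^m) (H @ [b]) = lastk (2^m - 1) H @ [b]"
proof -
  have "(2::nat)^m = Suc (2^m - 1)" by simp
  then show ?thesis by (metis lastk_snoc)
qed

lemma down_decomp:
  assumes n: "4 \<le> n" and L: "1 \<le> L" and a: "a \<in> set_pmf (arun \<epsilon> n L t)" and nB: "\<not> fst (snd a)"
    and d: "dcr n (fst a) (nxt \<epsilon> n (fst a) (fst w) (fst (snd w)) (snd (snd w)))"
  shows "\<exists>i<n. \<exists>m. \<exists>p\<in>{1/2, 1 - 1 / real n}. tau_of (fst a) i = p \<and> 2^m \<le> length (hist_of (fst a) i) + 1 \<and>
     2^m * (1 - p) + sfun \<epsilon> n (2^m * (1 - p)) \<le> real (zeros (lastk (2^m - 1) (hist_of (fst a) i) @ [snd (snd w) ! i]))"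
proof -
  define e where "e = 1 / real n"
  have e: "0 < e" "e \<le> 1/4" using n by (auto simp: e_def field_simps)
  have ok: "\<forall>k<n. okp e (tau_of (fst a) k)" using Inv_arun[OF n L a] nB by (simp add: Inv_def e_def)
  obtain i where i: "i < n" and lt: "tau_of (nxt \<epsilon> n (fst a) (fst w) (fst (snd w)) (snd (snd w))) i < tau_of (fst a) i"
    using d by (auto simp: dcr_def)
  define p where "p = tau_of (fst a) i"
  define H where "H = hist_of (fst a) i @ [snd (snd w) ! i]"
  have op: "okp e p" using ok i by (simp add: p_def)
  have lt2: "new_tau \<epsilon> n p H < p" using lt by (simp add: tau_nxt p_def H_def)
  have "sig \<epsilon> n p H = Down"
  proof (cases "sig \<epsilon> n p H")
    case Up
    then have "new_tau \<epsilon> n p H = 1 - e" by (simp add: new_tau_def e_def)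
    then show ?thesis using lt2 op e by (auto simp: okp_def)
  next
    case Down then show ?thesis .
  next
    case Stay
    then show ?thesis using lt2 by (simp add: new_tau_def)
  qed
  from sig_Down[OF this] obtain m where m: "2^m \<le> length H"
    "real (zeros (lastk (2^m) H)) \<ge> 2^m * (1 - p) + sfun \<epsilon> n (2^m * (1 - p))" by blast
  have "p \<in> {1/2, 1 - 1 / real n}" using op by (auto simp: okp_def e_def)
  then show ?thesis using m i unfolding H_def p_def lastk_pow by (intro exI[of _ i]) auto
qed

lemma down_window:
  assumes n: "4 \<le> n" "even n" and L: "1 \<le> L" and i: "i < n" and p: "p \<in> {1/2, 1 - 1 / real n}"
    and mt: "2^m \<le> t + 1" and eps: "\<epsilon> \<ge> 4/3"
  shows "measure_pmf.prob (atr \<epsilon> n L t) {q. \<not> fst (snd (fst q)) \<and> tau_of (fst (fst q)) i = p \<and>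
      2^m \<le> length (hist_of (fst (fst q)) i) + 1 \<and>
      2^m * (1 - p) + sfun \<epsilon> n (2^m * (1 - p)) \<le> real (zeros (lastk (2^m - 1) (hist_of (fst (fst q)) i) @ [snd (snd (snd q)) ! i]))}
    \<le> exp (- (\<epsilon>/3) * ln (real n))"
proof -
  define J where "J = (2::nat)^m - 1"
  have SJ: "Suc J = 2^m" by (simp add: J_def)
  define st where "st = t - J"
  have stJ: "st + J = t" using mt SJ by (simp add: st_def)
  define I :: "nat \<Rightarrow> ast \<Rightarrow> bool" where "I = (\<lambda>j a. \<not> fst (snd a) \<and> tau_of (fst a) i = p \<and> j \<le> length (hist_of (fst a) i))"
  define q where "q = 1 - p"
  have q0: "0 < q" using p n by (auto simp: q_def)
  define thr where "thr = 2^m * (1 - p) + sfun \<epsilon> n (2^m * (1 - p))"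
  define mu where "mu = real (2^m) * q"
  have mu0: "0 < mu" using q0 by (simp add: mu_def)
  have lnn: "0 \<le> ln (real n)" using n by simp
  obtain l where l: "0 \<le> l" "(1 + q * (exp l - 1)) ^ (2^m) / exp (l * (mu + sfun \<epsilon> n mu)) \<le> exp (- (\<epsilon>/3) * ln (real n))"
    using down_bound[OF less_imp_le[OF q0] mu_def mu0 eps lnn, of "sfun \<epsilon> n mu"] by (auto simp: sfun_def)
  have thr_eq: "thr = mu + sfun \<epsilon> n mu" by (simp add: thr_def mu_def q_def)
  have H1: "\<And>a w j. j < J \<Longrightarrow> w \<in> set_pmf (trip n (fst a)) \<Longrightarrow> I (Suc j) (anx \<epsilon> n L a w) \<Longrightarrow>
       I j a \<and> hist_of (fst (anx \<epsilon> n L a w)) i = hist_of (fst a) i @ [snd (snd w) ! i]"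
  proof -
    fix a w j assume h: "I (Suc j) (anx \<epsilon> n L a w)"
    then have ne: "hist_of (fst (anx \<epsilon> n L a w)) i \<noteq> []" by (auto simp: I_def)
    from hist_anx_nonempty[OF ne] h show "I j a \<and> hist_of (fst (anx \<epsilon> n L a w)) i = hist_of (fst a) i @ [snd (snd w) ! i]"
      by (auto simp: I_def anx_simps(2))
  qed
  have H2: "\<And>t a j. j \<le> J \<Longrightarrow> a \<in> set_pmf (arun \<epsilon> n L t) \<Longrightarrow> I j a \<Longrightarrow>
       measure_pmf.prob (trip n (fst a)) {w. \<not> snd (snd w) ! i} \<le> q"
    using H2_down[OF n L _ _ i] by (auto simp: I_def q_def)
  have WB: "emeasure (atr \<epsilon> n L (st + J))
     {pp. I J (fst pp) \<and> thr \<le> real (zeros (lastk J (hist_of (fst (fst pp)) i) @ [snd (snd (snd pp)) ! i]))}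
     \<le> ennreal ((1 + q * (exp l - 1)) ^ Suc J / exp (l * thr))"
    by (rule window_bound[OF H1 H2 less_imp_le[OF q0] l(1) refl])
  have sub: "{q. \<not> fst (snd (fst q)) \<and> tau_of (fst (fst q)) i = p \<and>
      2^m \<le> length (hist_of (fst (fst q)) i) + 1 \<and>
      2^m * (1 - p) + sfun \<epsilon> n (2^m * (1 - p)) \<le> real (zeros (lastk (2^m - 1) (hist_of (fst (fst q)) i) @ [snd (snd (snd q)) ! i]))}
    \<subseteq> {pp. I J (fst pp) \<and> thr \<le> real (zeros (lastk J (hist_of (fst (fst pp)) i) @ [snd (snd (snd pp)) ! i]))}"
    by (auto simp: I_def J_def thr_def)
  have "emeasure (atr \<epsilon> n L t) {q. \<not> fst (snd (fst q)) \<and> tau_of (fst (fst q)) i = p \<and>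
      2^m \<le> length (hist_of (fst (fst q)) i) + 1 \<and>
      2^m * (1 - p) + sfun \<epsilon> n (2^m * (1 - p)) \<le> real (zeros (lastk (2^m - 1) (hist_of (fst (fst q)) i) @ [snd (snd (snd q)) ! i]))}
     \<le> ennreal (exp (- (\<epsilon>/3) * ln (real n)))"
  proof -
    have "emeasure (atr \<epsilon> n L t) {q. \<not> fst (snd (fst q)) \<and> tau_of (fst (fst q)) i = p \<and>
      2^m \<le> length (hist_of (fst (fst q)) i) + 1 \<and>
      2^m * (1 - p) + sfun \<epsilon> n (2^m * (1 - p)) \<le> real (zeros (lastk (2^m - 1) (hist_of (fst (fst q)) i) @ [snd (snd (snd q)) ! i]))}
      \<le> emeasure (atr \<epsilon> n L (st + J)) {pp. I J (fst pp) \<and> thr \<le> real (zeros (lastk J (hist_of (fst (fst pp)) i) @ [snd (snd (snd pp)) ! i]))}"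
      unfolding stJ using sub by (rule emeasure_mono) simp
    also have "\<dots> \<le> ennreal ((1 + q * (exp l - 1)) ^ Suc J / exp (l * thr))" by (rule WB)
    also have "\<dots> \<le> ennreal (exp (- (\<epsilon>/3) * ln (real n)))"
      using l(2) by (intro ennreal_leI) (simp add: SJ thr_eq)
    finally show ?thesis .
  qed
  then show ?thesis by (simp add: measure_pmf.emeasure_eq_measure)
qed


lemma ones_zeros: "ones X + zeros X = length X"
  by (induction X) (auto simp: ones_def zeros_def)

lemma length_lastk: "k \<le> length X \<Longrightarrow> length (lastk k X) = k"
  by (simp add: lastk_def)

lemma stall_decomp:
  assumes n: "4 \<le> n" and L: "L = 2^mL" and a: "a \<in> set_pmf (arun \<epsilon> n L t)" and nB: "\<not> fst (snd a)"
    and Q: "0 < Qc n (fst a)" and c: "L \<le> Suc (snd (snd a))"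
    and nc: "\<not> chg n (fst a) (nxt \<epsilon> n (fst a) (fst w) (fst (snd w)) (snd (snd w)))"
  shows "\<exists>i. fh n (fst a) = Some i \<and>
     real L * (1/2) - sfun \<epsilon> n (real L * (1/2)) \<le> real (zeros (lastk (L - 1) (hist_of (fst a) i) @ [snd (snd w) ! i]))"
proof -
  have L1: "1 \<le> L" using L by simp
  obtain i where f: "fh n (fst a) = Some i" using fh_Qc[OF Q] by blast
  have fi: "i < n" "tau_of (fst a) i = 1/2" using fh_Some[OF f] by auto
  define H where "H = hist_of (fst a) i @ [snd (snd w) ! i]"
  have cl: "snd (snd a) \<le> length (hist_of (fst a) i)" using Inv_arun[OF n L1 a] fi by (simp add: Inv_def)
  have lenH: "2^mL \<le> length H" using c cl L by (simp add: H_def)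
  have X: "lastk (2^mL) H = lastk (L - 1) (hist_of (fst a) i) @ [snd (snd w) ! i]"
    by (simp add: H_def lastk_pow L)
  have lx: "length (lastk (2^mL) H) = L" using length_lastk[OF lenH] L by simp
  have "new_tau \<epsilon> n (tau_of (fst a) i) H = tau_of (fst a) i"
    using nc fi(1) by (auto simp: chg_def tau_nxt H_def)
  then have tau_eq: "new_tau \<epsilon> n (1/2) H = 1/2" unfolding fi(2) .
  have ineq: "real L * (1/2) - sfun \<epsilon> n (real L * (1/2)) \<le> real (zeros (lastk (L - 1) (hist_of (fst a) i) @ [snd (snd w) ! i]))"
  proof (rule ccontr)
    assume "\<not> real L * (1/2) - sfun \<epsilon> n (real L * (1/2)) \<le> real (zeros (lastk (L - 1) (hist_of (fst a) i) @ [snd (snd w) ! i]))"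
    then have z: "real (zeros (lastk (2^mL) H)) < real L * (1/2) - sfun \<epsilon> n (real L * (1/2))" using X by simp
    have "real (ones (lastk (2^mL) H)) + real (zeros (lastk (2^mL) H)) = real L"
      using ones_zeros[of "lastk (2^mL) H"] lx by simp
    then have "real (ones (lastk (2^mL) H)) \<ge> 2^mL * (1/2) + sfun \<epsilon> n (2^mL * (1/2))"
      using z L by simp
    then have "sig \<epsilon> n (1/2) H = Up" using sig_Up[OF refl lenH] by blast
    then have "new_tau \<epsilon> n (1/2) H = 1 - 1 / real n" by (simp add: new_tau_def)
    then show False using tau_eq n by (simp add: field_simps)
  qed
  show ?thesis using f ineq by blast
qed

lemma stall_window:
  assumes n: "4 \<le> n" "even n" and L: "L = 2^mL" and i: "i < n" and eps: "\<epsilon> > 0"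
    and LK: "real L \<ge> (2 * \<epsilon>^2 + 8 * \<epsilon>) * ln (real n) / (1/256)^2"
  shows "measure_pmf.prob (atr \<epsilon> n L t) {q. \<not> fst (snd (fst q)) \<and> L - 1 \<le> snd (snd (fst q)) \<and>
      fh n (fst (fst q)) = Some i \<and>
      real L * (1/2) - sfun \<epsilon> n (real L * (1/2)) \<le> real (zeros (lastk (L - 1) (hist_of (fst (fst q)) i) @ [snd (snd (snd q)) ! i]))}
    \<le> exp (- \<epsilon> * ln (real n))"
proof -
  have L1: "1 \<le> L" using L by simp
  define S :: "(ast \<times> (bool list \<times> bool list \<times> bool list)) set" where "S = {q. \<not> fst (snd (fst q)) \<and> L - 1 \<le> snd (snd (fst q)) \<and>
      fh n (fst (fst q)) = Some i \<and>
      real L * (1/2) - sfun \<epsilon> n (real L * (1/2)) \<le> real (zeros (lastk (L - 1) (hist_of (fst (fst q)) i) @ [snd (snd (snd q)) ! i]))}"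
  define J where "J = L - 1"
  show ?thesis
  proof (cases "J \<le> t")
    case False
    have "set_pmf (atr \<epsilon> n L t) \<inter> S = {}"
    proof (rule ccontr)
      assume "set_pmf (atr \<epsilon> n L t) \<inter> S \<noteq> {}"
      then obtain pp where pp: "pp \<in> set_pmf (atr \<epsilon> n L t)" "pp \<in> S" by blast
      then have a: "fst pp \<in> set_pmf (arun \<epsilon> n L t)" by (auto simp: atr_def)
      have "snd (snd (fst pp)) \<le> t" using Inv_arun[OF n(1) L1 a] i by (auto simp: Inv_def)
      then show False using pp False by (simp add: S_def J_def)
    qed
    then have "measure_pmf.prob (atr \<epsilon> n L t) S = 0" by (simp add: measure_pmf_zero_iff)
    then have "measure_pmf.prob (atr \<epsilon> n L t) S \<le> exp (- \<epsilon> * ln (real n))" by simp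
    then show ?thesis unfolding S_def .
  next
    case True
    define st where "st = t - J"
    have stJ: "st + J = t" using True by (simp add: st_def)
    define I :: "nat \<Rightarrow> ast \<Rightarrow> bool" where "I = (\<lambda>j a. \<not> fst (snd a) \<and> j \<le> snd (snd a) \<and> fh n (fst a) = Some i)"
    define q :: real where "q = 1/2 - 1/256"
    define l :: real where "l = (1/256) / 2"
    define thr where "thr = real L * (1/2) - sfun \<epsilon> n (real L * (1/2))"
    have H1: "\<And>a w j. j < J \<Longrightarrow> w \<in> set_pmf (trip n (fst a)) \<Longrightarrow> I (Suc j) (anx \<epsilon> n L a w) \<Longrightarrow>
         I j a \<and> hist_of (fst (anx \<epsilon> n L a w)) i = hist_of (fst a) i @ [snd (snd w) ! i]"
    proof -
      fix a w j assume h: "I (Suc j) (anx \<epsilon> n L a w)"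
      then have c0: "snd (snd (anx \<epsilon> n L a w)) \<noteq> 0" by (auto simp: I_def)
      then have nc: "\<not> chg n (fst a) (fst (anx \<epsilon> n L a w))" by (auto simp: anx_simps(3) split: if_splits)
      then have c': "snd (snd (anx \<epsilon> n L a w)) = Suc (snd (snd a))" by (simp add: anx_simps(3))
      have same: "\<forall>k<n. tau_of (fst (anx \<epsilon> n L a w)) k = tau_of (fst a) k" using nc by (auto simp: chg_def)
      then have "fh n (fst (anx \<epsilon> n L a w)) = fh n (fst a)" by (rule fh_cong)
      moreover have "hist_of (fst (anx \<epsilon> n L a w)) i = hist_of (fst a) i @ [snd (snd w) ! i]"
        using same i by (simp add: anx_simps(1) hist_nxt tau_nxt)
      ultimately show "I j a \<and> hist_of (fst (anx \<epsilon> n L a w)) i = hist_of (fst a) i @ [snd (snd w) ! i]"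
        using h c' by (auto simp: I_def anx_simps(2))
    qed
    have H2: "\<And>t a j. j \<le> J \<Longrightarrow> a \<in> set_pmf (arun \<epsilon> n L t) \<Longrightarrow> I j a \<Longrightarrow>
         measure_pmf.prob (trip n (fst a)) {w. \<not> snd (snd w) ! i} \<le> q"
      using H2_stall[OF n L1] by (auto simp: I_def q_def)
    have q0: "0 \<le> q" by (simp add: q_def)
    have l0: "0 \<le> l" by (simp add: l_def)
    have WB: "emeasure (atr \<epsilon> n L (st + J))
       {pp. I J (fst pp) \<and> thr \<le> real (zeros (lastk J (hist_of (fst (fst pp)) i) @ [snd (snd (snd pp)) ! i]))}
       \<le> ennreal ((1 + q * (exp l - 1)) ^ Suc J / exp (l * thr))"
      by (rule window_bound[OF H1 H2 q0 l0 refl])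
    have SB: "(1 + (1/2 - 1/256) * (exp ((1/256)/2) - 1)) ^ L / exp ((1/256)/2 * (real L/2 - \<epsilon> * max (sqrt (real L/2 * ln (real n))) (ln (real n))))
        \<le> exp (- \<epsilon> * ln (real n))"
      using n eps LK by (intro stall_bound) auto
    have SJ: "Suc J = L" using L1 by (simp add: J_def)
    have "emeasure (atr \<epsilon> n L t) S \<le> emeasure (atr \<epsilon> n L (st + J))
       {pp. I J (fst pp) \<and> thr \<le> real (zeros (lastk J (hist_of (fst (fst pp)) i) @ [snd (snd (snd pp)) ! i]))}"
      unfolding stJ by (rule emeasure_mono) (auto simp: S_def I_def J_def thr_def)
    also have "\<dots> \<le> ennreal ((1 + q * (exp l - 1)) ^ Suc J / exp (l * thr))" by (rule WB)
    also have "\<dots> \<le> ennreal (exp (- \<epsilon> * ln (real n)))"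
      using SB by (intro ennreal_leI) (simp add: SJ q_def l_def thr_def sfun_def)
    finally show ?thesis by (simp add: measure_pmf.emeasure_eq_measure S_def)
  qed
qed


definition DWs :: "real \<Rightarrow> nat \<Rightarrow> nat \<Rightarrow> nat \<Rightarrow> real \<Rightarrow> (ast \<times> (bool list \<times> bool list \<times> bool list)) set" where
  "DWs \<epsilon> n i m p = {q. \<not> fst (snd (fst q)) \<and> tau_of (fst (fst q)) i = p \<and>
      2^m \<le> length (hist_of (fst (fst q)) i) + 1 \<and>
      2^m * (1 - p) + sfun \<epsilon> n (2^m * (1 - p)) \<le> real (zeros (lastk (2^m - 1) (hist_of (fst (fst q)) i) @ [snd (snd (snd q)) ! i]))}"

definition SWs :: "real \<Rightarrow> nat \<Rightarrow> nat \<Rightarrow> nat \<Rightarrow> (ast \<times> (bool list \<times> bool list \<times> bool list)) set" where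
  "SWs \<epsilon> n L i = {q. \<not> fst (snd (fst q)) \<and> L - 1 \<le> snd (snd (fst q)) \<and>
      fh n (fst (fst q)) = Some i \<and>
      real L * (1/2) - sfun \<epsilon> n (real L * (1/2)) \<le> real (zeros (lastk (L - 1) (hist_of (fst (fst q)) i) @ [snd (snd (snd q)) ! i]))}"

lemma set_atr: "pp \<in> set_pmf (atr \<epsilon> n L t) \<Longrightarrow> fst pp \<in> set_pmf (arun \<epsilon> n L t) \<and> snd pp \<in> set_pmf (trip n (fst (fst pp)))"
  by (auto simp: atr_def)

lemma step_bad:
  assumes n: "4 \<le> n" "even n" and L: "L = 2^mL" and eps: "\<epsilon> \<ge> 4/3"
    and LK: "real L \<ge> (2 * \<epsilon>^2 + 8 * \<epsilon>) * ln (real n) / (1/256)^2"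
    and tT: "t < T" and TM: "T < 2^Mb"
  shows "measure_pmf.prob (atr \<epsilon> n L t) {pp. \<not> fst (snd (fst pp)) \<and> fst (snd (anx \<epsilon> n L (fst pp) (snd pp)))}
     \<le> real n * real Mb * 2 * exp (- (\<epsilon>/3) * ln (real n)) + real n * exp (- \<epsilon> * ln (real n))"
proof -
  have L1: "1 \<le> L" using L by simp
  define Idx where "Idx = {..<n} \<times> {..<Mb} \<times> {1/2, 1 - 1 / real n}"
  define U1 where "U1 = (\<Union>x\<in>Idx. DWs \<epsilon> n (fst x) (fst (snd x)) (snd (snd x)))"
  define U2 where "U2 = (\<Union>i\<in>{..<n}. SWs \<epsilon> n L i)"
  define A where "A = {pp. \<not> fst (snd (fst pp)) \<and> fst (snd (anx \<epsilon> n L (fst pp) (snd pp)))}"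
  have sub: "A \<inter> set_pmf (atr \<epsilon> n L t) \<subseteq> U1 \<union> U2"
  proof
    fix pp assume pp: "pp \<in> A \<inter> set_pmf (atr \<epsilon> n L t)"
    define a where "a = fst pp"
    define w where "w = snd pp"
    have a: "a \<in> set_pmf (arun \<epsilon> n L t)" using set_atr pp by (auto simp: a_def)
    have nB: "\<not> fst (snd a)" and B': "fst (snd (anx \<epsilon> n L a w))" using pp by (auto simp: A_def a_def w_def)
    have ppe: "pp = (a, w)" by (simp add: a_def w_def)
    from B' nB consider (d) "dcr n (fst a) (fst (anx \<epsilon> n L a w))"
      | (s) "0 < Qc n (fst a) \<and> L \<le> Suc (snd (snd a)) \<and> \<not> chg n (fst a) (fst (anx \<epsilon> n L a w))"
      by (auto simp: anx_simps(2))
    then show "pp \<in> U1 \<union> U2"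
    proof cases
      case d
      then have "dcr n (fst a) (nxt \<epsilon> n (fst a) (fst w) (fst (snd w)) (snd (snd w)))" by (simp add: anx_simps(1))
      from down_decomp[OF n(1) L1 a nB this] obtain i m p where
        imp: "i < n" "p \<in> {1/2, 1 - 1 / real n}" "tau_of (fst a) i = p" "2^m \<le> length (hist_of (fst a) i) + 1"
        "2^m * (1 - p) + sfun \<epsilon> n (2^m * (1 - p)) \<le> real (zeros (lastk (2^m - 1) (hist_of (fst a) i) @ [snd (snd w) ! i]))"
        by blast
      have "length (hist_of (fst a) i) \<le> t" using Inv_arun[OF n(1) L1 a] imp(1) by (simp add: Inv_def)
      then have "(2::nat)^m < 2^Mb" using imp(4) tT TM by linarith
      then have "m < Mb" by (simp add: power_strict_increasing_iff)
      then have "(i, m, p) \<in> Idx" using imp by (simp add: Idx_def)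
      moreover have "pp \<in> DWs \<epsilon> n i m p" using imp nB by (simp add: DWs_def ppe)
      ultimately show ?thesis unfolding U1_def by force
    next
      case s
      then have "\<not> chg n (fst a) (nxt \<epsilon> n (fst a) (fst w) (fst (snd w)) (snd (snd w)))" by (simp add: anx_simps(1))
      from stall_decomp[OF n(1) L a nB conjunct1[OF s] conjunct1[OF conjunct2[OF s]] this] obtain i where
        i: "fh n (fst a) = Some i"
        "real L * (1/2) - sfun \<epsilon> n (real L * (1/2)) \<le> real (zeros (lastk (L - 1) (hist_of (fst a) i) @ [snd (snd w) ! i]))"
        by blast
      have "i < n" using fh_Some[OF i(1)] by simp
      moreover have "pp \<in> SWs \<epsilon> n L i" using i s nB by (auto simp: SWs_def ppe)
      ultimately show ?thesis unfolding U2_def by blast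
    qed
  qed
  have "measure_pmf.prob (atr \<epsilon> n L t) A = measure_pmf.prob (atr \<epsilon> n L t) (A \<inter> set_pmf (atr \<epsilon> n L t))"
    by (simp add: measure_Int_set_pmf)
  also have "\<dots> \<le> measure_pmf.prob (atr \<epsilon> n L t) (U1 \<union> U2)"
    using sub by (intro measure_pmf.finite_measure_mono) auto
  also have "\<dots> \<le> measure_pmf.prob (atr \<epsilon> n L t) U1 + measure_pmf.prob (atr \<epsilon> n L t) U2"
    by (rule measure_subadditive) auto
  also have "measure_pmf.prob (atr \<epsilon> n L t) U1 \<le> real n * real Mb * 2 * exp (- (\<epsilon>/3) * ln (real n))"
  proof -
    have "measure_pmf.prob (atr \<epsilon> n L t) U1 \<le> (\<Sum>x\<in>Idx. measure_pmf.prob (atr \<epsilon> n L t) (DWs \<epsilon> n (fst x) (fst (snd x)) (snd (snd x))))"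
      unfolding U1_def by (rule measure_pmf.finite_measure_subadditive_finite) (auto simp: Idx_def)
    also have "\<dots> \<le> of_nat (card Idx) * exp (- (\<epsilon>/3) * ln (real n))"
    proof (rule sum_bounded_above)
      fix x assume x: "x \<in> Idx"
      obtain i m p where xe: "x = (i, m, p)" by (metis prod_cases3)
      have i: "i < n" and p: "p \<in> {1/2, 1 - 1 / real n}" using x unfolding xe Idx_def by (simp_all only: mem_Sigma_iff) auto
      show "measure_pmf.prob (atr \<epsilon> n L t) (DWs \<epsilon> n (fst x) (fst (snd x)) (snd (snd x))) \<le> exp (- (\<epsilon>/3) * ln (real n))"
      proof (cases "2^m \<le> t + 1")
        case True
        then show ?thesis unfolding xe DWs_def fst_conv snd_conv by (rule down_window[OF n L1 i p _ eps])
      next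
        case False
        have "set_pmf (atr \<epsilon> n L t) \<inter> DWs \<epsilon> n i m p = {}"
        proof (rule ccontr)
          assume "set_pmf (atr \<epsilon> n L t) \<inter> DWs \<epsilon> n i m p \<noteq> {}"
          then obtain q where q: "q \<in> set_pmf (atr \<epsilon> n L t)" "q \<in> DWs \<epsilon> n i m p" by blast
          have "Inv n L t (fst q)" using Inv_arun[OF n(1) L1] set_atr[OF q(1)] by blast
          then have "length (hist_of (fst (fst q)) i) \<le> t" using i by (simp add: Inv_def)
          then show False using q(2) False by (simp add: DWs_def)
        qed
        then have "measure_pmf.prob (atr \<epsilon> n L t) (DWs \<epsilon> n i m p) = 0" by (simp add: measure_pmf_zero_iff)
        then show ?thesis unfolding xe by simp
      qed
    qed
    also have "\<dots> \<le> real n * real Mb * 2 * exp (- (\<epsilon>/3) * ln (real n))"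
    proof -
      have "card {1/2, 1 - 1 / real n} \<le> 2" by (rule card_insert_le_m1) auto
      then have "card Idx \<le> n * Mb * 2" by (simp add: Idx_def card_cartesian_product)
      then have "real (card Idx) \<le> real n * real Mb * 2" by (metis of_nat_le_iff of_nat_mult of_nat_numeral)
      then show ?thesis by (intro mult_right_mono) auto
    qed
    finally show ?thesis .
  qed
  also have "measure_pmf.prob (atr \<epsilon> n L t) U2 \<le> real n * exp (- \<epsilon> * ln (real n))"
  proof -
    have "measure_pmf.prob (atr \<epsilon> n L t) U2 \<le> (\<Sum>i\<in>{..<n}. measure_pmf.prob (atr \<epsilon> n L t) (SWs \<epsilon> n L i))"
      unfolding U2_def by (rule measure_pmf.finite_measure_subadditive_finite) auto
    also have "\<dots> \<le> of_nat (card {..<n}) * exp (- \<epsilon> * ln (real n))"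
    proof (rule sum_bounded_above)
      fix i assume "i \<in> {..<n}"
      then have i: "i < n" by simp
      have e0: "\<epsilon> > 0" using eps by simp
      show "measure_pmf.prob (atr \<epsilon> n L t) (SWs \<epsilon> n L i) \<le> exp (- \<epsilon> * ln (real n))"
        unfolding SWs_def by (rule stall_window[OF n L i e0 LK])
    qed
    finally show ?thesis by simp
  qed
  finally show ?thesis by (simp add: A_def)
qed


lemma map_fst_atr: "map_pmf fst (atr \<epsilon> n L t) = arun \<epsilon> n L t"
  by (simp add: atr_def map_bind_pmf map_pmf_comp bind_return_pmf')

lemma B_bound:
  assumes n: "4 \<le> n" "even n" and L: "L = 2^mL" and eps: "\<epsilon> \<ge> 4/3"
    and LK: "real L \<ge> (2 * \<epsilon>^2 + 8 * \<epsilon>) * ln (real n) / (1/256)^2"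
    and TM: "T < 2^Mb"
  shows "t \<le> T \<Longrightarrow> measure_pmf.prob (arun \<epsilon> n L t) {a. fst (snd a)}
     \<le> real t * (real n * real Mb * 2 * exp (- (\<epsilon>/3) * ln (real n)) + real n * exp (- \<epsilon> * ln (real n)))"
proof (induction t)
  case 0 then show ?case by (simp add: init_state_def)
next
  case (Suc t)
  define SB where "SB = real n * real Mb * 2 * exp (- (\<epsilon>/3) * ln (real n)) + real n * exp (- \<epsilon> * ln (real n))"
  have tT: "t < T" using Suc.prems by simp
  have "measure_pmf.prob (arun \<epsilon> n L (Suc t)) {a. fst (snd a)} =
        measure_pmf.prob (atr \<epsilon> n L t) {pp. fst (snd (anx \<epsilon> n L (fst pp) (snd pp)))}"
    by (simp only: arun_Suc_atr measure_map_pmf) (simp add: vimage_def)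
  also have "\<dots> \<le> measure_pmf.prob (atr \<epsilon> n L t) ({pp. fst (snd (fst pp))} \<union>
        {pp. \<not> fst (snd (fst pp)) \<and> fst (snd (anx \<epsilon> n L (fst pp) (snd pp)))})"
    by (intro measure_pmf.finite_measure_mono) auto
  also have "\<dots> \<le> measure_pmf.prob (atr \<epsilon> n L t) {pp. fst (snd (fst pp))} +
        measure_pmf.prob (atr \<epsilon> n L t) {pp. \<not> fst (snd (fst pp)) \<and> fst (snd (anx \<epsilon> n L (fst pp) (snd pp)))}"
    by (rule measure_subadditive) auto
  also have "measure_pmf.prob (atr \<epsilon> n L t) {pp. fst (snd (fst pp))} = measure_pmf.prob (arun \<epsilon> n L t) {a. fst (snd a)}"
  proof -
    have "measure_pmf.prob (arun \<epsilon> n L t) {a. fst (snd a)} = measure_pmf.prob (map_pmf fst (atr \<epsilon> n L t)) {a. fst (snd a)}"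
      by (simp add: map_fst_atr)
    then show ?thesis by (simp add: vimage_def)
  qed
  also have "measure_pmf.prob (atr \<epsilon> n L t) {pp. \<not> fst (snd (fst pp)) \<and> fst (snd (anx \<epsilon> n L (fst pp) (snd pp)))} \<le> SB"
    unfolding SB_def by (rule step_bad[OF n L eps LK tT TM])
  finally show ?case using Suc by (simp add: SB_def algebra_simps)
qed

lemma pmf_samp_ones: "pmf (samp ps) (replicate (length ps) True) = prod_list ps"
  if "\<forall>p\<in>set ps. 0 \<le> p \<and> p \<le> 1"
  using that
proof (induction ps)
  case Nil then show ?case by simp
next
  case (Cons p ps)
  have inj: "inj (Cons True)" by (simp add: inj_def)
  have "pmf (map_pmf (Cons True) (samp ps)) (True # replicate (length ps) True) = pmf (samp ps) (replicate (length ps) True)"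
    by (rule pmf_map_inj'[OF inj])
  moreover have "pmf (map_pmf (Cons False) (samp ps)) (True # replicate (length ps) True) = 0"
    by (simp add: pmf_map vimage_def)
  ultimately show ?case using Cons by (simp add: pmf_bind_bern)
qed

lemma prob_all_ones:
  assumes n: "4 \<le> n" "even n" and t: "\<forall>k<n. tau_of s k = 1 - 1 / real n"
  shows "measure_pmf.prob (trip n s) {w. fst w \<noteq> all_ones n} \<le> 3/4"
proof -
  have "measure_pmf.prob (trip n s) {w. fst w = all_ones n} = measure_pmf.prob (map_pmf fst (trip n s)) {all_ones n}"
    by (simp add: vimage_def)
  also have "map_pmf fst (trip n s) = sample_ind n (tau_of s)"
    by (simp add: trip_def map_bind_pmf map_pmf_comp bind_return_pmf')
  also have "measure_pmf.prob (sample_ind n (tau_of s)) {all_ones n} = pmf (sample_ind n (tau_of s)) (all_ones n)"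
    by (simp add: measure_pmf_single)
  also have "\<dots> = (1 - 1 / real n) ^ n"
  proof -
    have m: "map (tau_of s) [0..<n] = replicate n (1 - 1 / real n)"
      using t by (simp add: list_eq_iff_nth_eq)
    have "pmf (samp (replicate n (1 - 1 / real n))) (replicate (length (replicate n (1 - 1 / real n))) True)
        = prod_list (replicate n (1 - 1 / real n))"
      using n by (intro pmf_samp_ones) auto
    then show ?thesis by (simp add: sample_ind_def sample_bits_samp m all_ones_def)
  qed
  finally have eq: "measure_pmf.prob (trip n s) {w. fst w = all_ones n} = (1 - 1 / real n) ^ n" .
  have "{w. fst w \<noteq> all_ones n} = space (measure_pmf (trip n s)) - {w. fst w = all_ones n}" by auto
  then have "measure_pmf.prob (trip n s) {w. fst w \<noteq> all_ones n} = 1 - (1 - 1 / real n) ^ n"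
    using measure_pmf.prob_compl[of "{w. fst w = all_ones n}" "trip n s"] eq by simp
  then show ?thesis using pow_quarter[OF n(2)] n by simp
qed


lemma found_anx: "found_of (fst a) = Some r \<Longrightarrow> found_of (fst (anx \<epsilon> n L a w)) = Some r"
  by (simp add: anx_simps found_nxt)

lemma found_anx_None: "found_of (fst (anx \<epsilon> n L a w)) = None \<Longrightarrow> fst w \<noteq> all_ones n"
  by (auto simp: anx_simps found_nxt split: option.splits if_splits)

lemma B_anx: "fst (snd a) \<Longrightarrow> fst (snd (anx \<epsilon> n L a w))"
  by (simp add: anx_simps)

lemma phase2:
  assumes n: "4 \<le> n" "even n" and L: "1 \<le> L" and t: "L * n \<le> t"
  shows "measure_pmf.prob (arun \<epsilon> n L (Suc t)) {a. \<not> fst (snd a) \<and> found_of (fst a) = None}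
     \<le> 3/4 * measure_pmf.prob (arun \<epsilon> n L t) {a. \<not> fst (snd a) \<and> found_of (fst a) = None}"
proof -
  define S2 :: "ast set" where "S2 = {a. \<not> fst (snd a) \<and> found_of (fst a) = None}"
  have pw: "emeasure (astep \<epsilon> n L a) S2 \<le> ennreal (3/4) * indicator S2 a"
    if a: "a \<in> set_pmf (arun \<epsilon> n L t)" for a
  proof (cases "a \<in> S2")
    case False
    have "anx \<epsilon> n L a -` S2 = {}"
    proof -
      have "anx \<epsilon> n L a w \<notin> S2" for w
      proof (cases "fst (snd a)")
        case True then show ?thesis using B_anx[OF True] by (simp add: S2_def)
      next
        case nb: False
        then obtain r where "found_of (fst a) = Some r" using False by (auto simp: S2_def)
        then show ?thesis using found_anx by (simp add: S2_def)
      qed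
      then show ?thesis by blast
    qed
    then show ?thesis using False by (simp add: astep_def)
  next
    case True
    then have nB: "\<not> fst (snd a)" and fN: "found_of (fst a) = None" by (auto simp: S2_def)
    have I: "Inv n L t a" by (rule Inv_arun[OF n(1) L a])
    have Q0: "Qc n (fst a) = 0"
    proof (rule ccontr)
      assume "Qc n (fst a) \<noteq> 0"
      then have Qp: "0 < Qc n (fst a)" by simp
      then have h: "snd (snd a) + 1 \<le> L" "t \<le> L * (n - Qc n (fst a)) + snd (snd a)"
        using I nB by (auto simp: Inv_def)
      have "L * (n - Qc n (fst a)) \<le> L * (n - 1)" using Qp by (intro mult_left_mono) auto
      then have "t < L * (n - 1) + L" using h by linarith
      also have "L * (n - 1) + L = L * n" using n by (cases n) (auto simp: algebra_simps)
      finally show False using t by simp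
    qed
    have all: "\<forall>k<n. tau_of (fst a) k = 1 - 1 / real n"
    proof (intro allI impI)
      fix k assume k: "k < n"
      have "{i. i < n \<and> tau_of (fst a) i = 1/2} = {}" using Q0 by (simp add: Qc_def)
      then have "tau_of (fst a) k \<noteq> 1/2" using k by auto
      moreover have "okp (1 / real n) (tau_of (fst a) k)" using I nB k by (simp add: Inv_def)
      ultimately show "tau_of (fst a) k = 1 - 1 / real n" by (simp add: okp_def)
    qed
    have "emeasure (astep \<epsilon> n L a) S2 = emeasure (trip n (fst a)) (anx \<epsilon> n L a -` S2)"
      by (simp add: astep_def)
    also have "\<dots> \<le> emeasure (trip n (fst a)) {w. fst w \<noteq> all_ones n}"
    proof (rule emeasure_mono)
      show "anx \<epsilon> n L a -` S2 \<subseteq> {w. fst w \<noteq> all_ones n}"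
      proof
        fix w assume "w \<in> anx \<epsilon> n L a -` S2"
        then have "found_of (fst (anx \<epsilon> n L a w)) = None" by (simp add: S2_def)
        then show "w \<in> {w. fst w \<noteq> all_ones n}" using found_anx_None by blast
      qed
    qed simp
    also have "\<dots> = ennreal (measure_pmf.prob (trip n (fst a)) {w. fst w \<noteq> all_ones n})"
      by (simp add: measure_pmf.emeasure_eq_measure)
    also have "\<dots> \<le> ennreal (3/4)" using prob_all_ones[OF n all] by (intro ennreal_leI)
    finally show ?thesis using True by simp
  qed
  have "emeasure (arun \<epsilon> n L (Suc t)) S2 = (\<integral>\<^sup>+a. emeasure (astep \<epsilon> n L a) S2 \<partial>arun \<epsilon> n L t)"
    by simp
  also have "\<dots> \<le> (\<integral>\<^sup>+a. ennreal (3/4) * indicator S2 a \<partial>arun \<epsilon> n L t)"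
    using pw by (intro nn_integral_mono_AE AE_pmfI) auto
  also have "\<dots> = ennreal (3/4) * emeasure (arun \<epsilon> n L t) S2"
    by (rule nn_integral_cmult_indicator) auto
  finally have "emeasure (arun \<epsilon> n L (Suc t)) S2 \<le> ennreal (3/4) * emeasure (arun \<epsilon> n L t) S2" .
  then show ?thesis
    by (simp add: measure_pmf.emeasure_eq_measure S2_def[symmetric] ennreal_mult[symmetric])
qed

lemma phase2_iter:
  assumes n: "4 \<le> n" "even n" and L: "1 \<le> L"
  shows "measure_pmf.prob (arun \<epsilon> n L (L * n + k)) {a. \<not> fst (snd a) \<and> found_of (fst a) = None} \<le> (3/4)^k"
proof (induction k)
  case 0 then show ?case by simp
next
  case (Suc k)
  have "measure_pmf.prob (arun \<epsilon> n L (Suc (L * n + k))) {a. \<not> fst (snd a) \<and> found_of (fst a) = None}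
     \<le> 3/4 * measure_pmf.prob (arun \<epsilon> n L (L * n + k)) {a. \<not> fst (snd a) \<and> found_of (fst a) = None}"
    by (rule phase2[OF n L]) simp
  also have "\<dots> \<le> 3/4 * (3/4)^k" using Suc by simp
  finally show ?case by simp
qed

lemma found_mono:
  "measure_pmf.prob (arun \<epsilon> n L t) {a. \<exists>r. found_of (fst a) = Some r \<and> r \<le> R}
   \<le> measure_pmf.prob (arun \<epsilon> n L (t + d)) {a. \<exists>r. found_of (fst a) = Some r \<and> r \<le> R}"
proof (induction d)
  case 0 then show ?case by simp
next
  case (Suc d)
  define E :: "ast set" where "E = {a. \<exists>r. found_of (fst a) = Some r \<and> r \<le> R}"
  have pw: "indicator E a \<le> emeasure (astep \<epsilon> n L a) E" for a
  proof (cases "a \<in> E")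
    case True
    then obtain r where r: "found_of (fst a) = Some r" "r \<le> R" by (auto simp: E_def)
    have "anx \<epsilon> n L a -` E = UNIV" using found_anx[OF r(1)] r(2) by (auto simp: E_def)
    then show ?thesis using True by (simp add: astep_def)
  next
    case False then show ?thesis by simp
  qed
  have "emeasure (arun \<epsilon> n L (t + d)) E = (\<integral>\<^sup>+a. indicator E a \<partial>arun \<epsilon> n L (t + d))" by simp
  also have "\<dots> \<le> (\<integral>\<^sup>+a. emeasure (astep \<epsilon> n L a) E \<partial>arun \<epsilon> n L (t + d))"
    using pw by (intro nn_integral_mono) auto
  also have "\<dots> = emeasure (arun \<epsilon> n L (t + Suc d)) E" by simp
  finally have "measure_pmf.prob (arun \<epsilon> n L (t + d)) E \<le> measure_pmf.prob (arun \<epsilon> n L (t + Suc d)) E"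
    by (simp add: measure_pmf.emeasure_eq_measure)
  then show ?case using Suc by (simp add: E_def)
qed


lemma main_bound:
  assumes n: "4 \<le> n" "even n" and L: "L = 2^mL" and eps: "\<epsilon> \<ge> 4/3"
    and LK: "real L \<ge> (2 * \<epsilon>^2 + 8 * \<epsilon>) * ln (real n) / (1/256)^2"
    and T2: "T2 = L * n + K2" and TM: "T2 < 2^Mb" and TR: "2 * real T2 \<le> TR"
  shows "prob_runtime_le \<epsilon> n TR \<ge> 1 - (real T2 * (real n * real Mb * 2 * exp (- (\<epsilon>/3) * ln (real n)) + real n * exp (- \<epsilon> * ln (real n))) + (3/4)^K2)"
proof -
  have L1: "1 \<le> L" using L by simp
  define N where "N = nat \<lceil>TR\<rceil>"
  have NT: "T2 \<le> N"
  proof -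
    have "real T2 \<le> TR" using TR by simp
    then show ?thesis unfolding N_def by linarith
  qed
  define E :: "ast set" where "E = {a. \<exists>r. found_of (fst a) = Some r \<and> r \<le> 2 * T2}"
  have "prob_runtime_le \<epsilon> n TR = measure_pmf.prob (map_pmf fst (arun \<epsilon> n L N)) {s. \<exists>r. found_of s = Some r \<and> real r \<le> TR}"
    by (simp add: prob_runtime_le_def arun_proj N_def)
  also have "\<dots> = measure_pmf.prob (arun \<epsilon> n L N) {a. \<exists>r. found_of (fst a) = Some r \<and> real r \<le> TR}"
    by (simp add: vimage_def)
  also have "\<dots> \<ge> measure_pmf.prob (arun \<epsilon> n L N) E"
  proof (rule measure_pmf.finite_measure_mono)
    show "E \<subseteq> {a. \<exists>r. found_of (fst a) = Some r \<and> real r \<le> TR}"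
    proof
      fix a assume "a \<in> E"
      then obtain r where r: "found_of (fst a) = Some r" "r \<le> 2 * T2" by (auto simp: E_def)
      then have "real r \<le> TR" using TR by linarith
      then show "a \<in> {a. \<exists>r. found_of (fst a) = Some r \<and> real r \<le> TR}" using r by auto
    qed
  qed simp
  also have "measure_pmf.prob (arun \<epsilon> n L N) E \<ge> measure_pmf.prob (arun \<epsilon> n L T2) E"
    using found_mono[of \<epsilon> n L T2 "2 * T2" "N - T2"] NT by (simp add: E_def)
  also have "measure_pmf.prob (arun \<epsilon> n L T2) E \<ge> measure_pmf.prob (arun \<epsilon> n L T2) {a. found_of (fst a) \<noteq> None}"
  proof -
    have "measure_pmf.prob (arun \<epsilon> n L T2) {a. found_of (fst a) \<noteq> None} =
          measure_pmf.prob (arun \<epsilon> n L T2) ({a. found_of (fst a) \<noteq> None} \<inter> set_pmf (arun \<epsilon> n L T2))"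
      by (simp add: measure_Int_set_pmf)
    also have "\<dots> \<le> measure_pmf.prob (arun \<epsilon> n L T2) E"
    proof (rule measure_pmf.finite_measure_mono)
      show "{a. found_of (fst a) \<noteq> None} \<inter> set_pmf (arun \<epsilon> n L T2) \<subseteq> E"
      proof
        fix a assume a: "a \<in> {a. found_of (fst a) \<noteq> None} \<inter> set_pmf (arun \<epsilon> n L T2)"
        then obtain r where r: "found_of (fst a) = Some r" by auto
        have "Inv n L T2 a" using Inv_arun[OF n(1) L1] a by blast
        then have "r \<le> 2 * T2" using r by (simp add: Inv_def)
        then show "a \<in> E" using r by (simp add: E_def)
      qed
    qed simp
    finally show ?thesis .
  qed
  also have "measure_pmf.prob (arun \<epsilon> n L T2) {a. found_of (fst a) \<noteq> None} =
      1 - measure_pmf.prob (arun \<epsilon> n L T2) {a. found_of (fst a) = None}"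
  proof -
    have "{a. found_of (fst a) \<noteq> None} = space (measure_pmf (arun \<epsilon> n L T2)) - {a. found_of (fst a) = None}" by auto
    then show ?thesis using measure_pmf.prob_compl[of "{a. found_of (fst a) = None}" "arun \<epsilon> n L T2"] by simp
  qed
  finally have chain: "1 - measure_pmf.prob (arun \<epsilon> n L T2) {a. found_of (fst a) = None} \<le> prob_runtime_le \<epsilon> n TR" .
  have "measure_pmf.prob (arun \<epsilon> n L T2) {a. found_of (fst a) = None} \<le>
     real T2 * (real n * real Mb * 2 * exp (- (\<epsilon>/3) * ln (real n)) + real n * exp (- \<epsilon> * ln (real n))) + (3/4)^K2"
  proof -
    have "measure_pmf.prob (arun \<epsilon> n L T2) {a. found_of (fst a) = None} \<le>
          measure_pmf.prob (arun \<epsilon> n L T2) ({a. fst (snd a)} \<union> {a. \<not> fst (snd a) \<and> found_of (fst a) = None})"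
      by (intro measure_pmf.finite_measure_mono) auto
    also have "\<dots> \<le> measure_pmf.prob (arun \<epsilon> n L T2) {a. fst (snd a)} +
          measure_pmf.prob (arun \<epsilon> n L T2) {a. \<not> fst (snd a) \<and> found_of (fst a) = None}"
      by (rule measure_subadditive) auto
    also have "measure_pmf.prob (arun \<epsilon> n L T2) {a. fst (snd a)} \<le>
        real T2 * (real n * real Mb * 2 * exp (- (\<epsilon>/3) * ln (real n)) + real n * exp (- \<epsilon> * ln (real n)))"
      by (rule B_bound[OF n L eps LK TM]) simp
    also have "measure_pmf.prob (arun \<epsilon> n L T2) {a. \<not> fst (snd a) \<and> found_of (fst a) = None} \<le> (3/4)^K2"
      using phase2_iter[OF n L1, of \<epsilon> K2] T2 by simp
    finally show ?thesis by simp
  qed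
  then show ?thesis using chain by linarith
qed


lemma final_arith:
  fixes x lnn T2 Mb E1 E3 K2p C1 :: real
  assumes x: "1 \<le> x" and l: "1 \<le> lnn" and T: "0 \<le> T2" "T2 \<le> C1 * x * lnn" and M: "0 \<le> Mb" "Mb \<le> 5 * lnn"
    and E: "0 \<le> E1" "E1 \<le> E3" and K: "K2p \<le> E1" and C: "0 \<le> C1"
  shows "T2 * (x * Mb * 2 * E3 + x * E1) + K2p \<le> (11 * C1 + 1) * (x^2 * E3) * lnn^2"
proof -
  have E3: "0 \<le> E3" using E by simp
  have a: "T2 * (x * Mb * 2 * E3) \<le> (C1 * x * lnn) * (x * (5 * lnn) * 2 * E3)"
  proof (rule mult_mono)
    show "x * Mb * 2 * E3 \<le> x * (5 * lnn) * 2 * E3"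
      using M x E3 by (intro mult_right_mono mult_left_mono) auto
  qed (use T M x E3 in auto)
  have b: "T2 * (x * E1) \<le> (C1 * x * lnn) * (x * E3)"
    using T E x by (intro mult_mono mult_left_mono) auto
  have c: "(C1 * x * lnn) * (x * E3) \<le> C1 * (x^2 * E3) * lnn^2"
  proof -
    have "lnn \<le> lnn^2" using l by (simp add: power2_eq_square)
    then have "C1 * (x^2 * E3) * lnn \<le> C1 * (x^2 * E3) * lnn^2"
      using C E3 by (intro mult_left_mono) auto
    then show ?thesis by (simp add: power2_eq_square algebra_simps)
  qed
  have d: "K2p \<le> (x^2 * E3) * lnn^2"
  proof -
    have "1 \<le> x^2" "1 \<le> lnn^2" using x l by (simp_all add: one_le_power)
    then have "1 * 1 \<le> x^2 * lnn^2" by (intro mult_mono) auto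
    then have "1 \<le> x^2 * lnn^2" by simp
    then have "E3 * 1 \<le> E3 * (x^2 * lnn^2)" using E3 by (intro mult_left_mono) auto
    then show ?thesis using K E by (simp add: algebra_simps)
  qed
  have e: "(C1 * x * lnn) * (x * (5 * lnn) * 2 * E3) = 10 * C1 * (x^2 * E3) * lnn^2"
    by (simp add: power2_eq_square algebra_simps)
  have "T2 * (x * Mb * 2 * E3 + x * E1) + K2p = T2 * (x * Mb * 2 * E3) + T2 * (x * E1) + K2p"
    by (simp add: algebra_simps)
  also have "\<dots> \<le> 10 * C1 * (x^2 * E3) * lnn^2 + C1 * (x^2 * E3) * lnn^2 + (x^2 * E3) * lnn^2"
    using a b c d e by linarith
  also have "\<dots> = (11 * C1 + 1) * (x^2 * E3) * lnn^2" by (simp add: algebra_simps)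
  finally show ?thesis .
qed


theorem theorem24:
  fixes \<epsilon> :: real
  assumes "\<epsilon> > 6"
  shows "\<exists>C c :: real. \<exists>N0 :: nat. \<forall>n \<ge> N0. even n \<longrightarrow>
           prob_runtime_le \<epsilon> n (C * real n * ln (real n))
             \<ge> 1 - c * real n powr (2 - \<epsilon> / 3) * (ln (real n))^2"
proof -
  have eps: "\<epsilon> \<ge> 4/3" using assms by simp
  define K :: real where "K = (2 * \<epsilon>^2 + 8 * \<epsilon>) / (1/256)^2"
  have K0: "0 \<le> K" using assms by (simp add: K_def)
  define C1 :: real where "C1 = 2 * K + 4 * \<epsilon> + 2"
  have C1: "1 \<le> C1" using K0 assms by (simp add: C1_def)
  define N0 :: nat where "N0 = nat \<lceil>exp (2 * ln C1 + 1)\<rceil> + 4"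
  show ?thesis
  proof (rule exI[of _ "2 * C1"], rule exI[of _ "11 * C1 + 1"], rule exI[of _ N0], intro allI impI)
    fix n :: nat assume nN: "N0 \<le> n" and ev: "even n"
    have n4: "4 \<le> n" using nN by (simp add: N0_def)
    have npos: "0 < real n" using n4 by simp
    have nexp: "exp (2 * ln C1 + 1) \<le> real n"
    proof -
      have "exp (2 * ln C1 + 1) \<le> real (nat \<lceil>exp (2 * ln C1 + 1)\<rceil>)" by linarith
      also have "\<dots> \<le> real n" using nN by (simp add: N0_def)
      finally show ?thesis .
    qed
    define lnn where "lnn = ln (real n)"
    have lnn_ge: "2 * ln C1 + 1 \<le> lnn" unfolding lnn_def using nexp npos by (subst ln_ge_iff) auto
    have lnC1: "0 \<le> ln C1" using C1 by simp
    have l1: "1 \<le> lnn" using lnn_ge lnC1 by linarith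
    have lnn_n: "lnn \<le> real n" unfolding lnn_def using ln_le_minus_one[OF npos] by linarith
    have exm: "\<exists>m::nat. K * lnn \<le> 2^m"
    proof -
      obtain m :: nat where "K * lnn < 2^m" using real_arch_pow[of 2 "K * lnn"] by auto
      then show ?thesis by (intro exI[of _ m]) simp
    qed
    define mL where "mL = (LEAST m::nat. K * lnn \<le> 2^m)"
    have mL: "K * lnn \<le> 2^mL" unfolding mL_def by (rule LeastI_ex[OF exm])
    define L :: nat where "L = 2^mL"
    have Lr: "real L = 2^mL" by (simp add: L_def)
    have LK: "real L \<ge> (2 * \<epsilon>^2 + 8 * \<epsilon>) * ln (real n) / (1/256)^2"
      using mL Lr by (simp add: K_def lnn_def)
    have Lup: "real L \<le> (2 * K + 1) * lnn"
    proof (cases mL)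
      case 0
      then show ?thesis using l1 K0 Lr by (simp add: algebra_simps) (smt (verit) mult_nonneg_nonneg)
    next
      case (Suc m)
      have "\<not> K * lnn \<le> 2^m" unfolding mL_def
        using not_less_Least[of m "\<lambda>m. K * lnn \<le> 2^m"] Suc mL_def by simp
      then have "2^m < K * lnn" by simp
      then have "real L < 2 * K * lnn" using Lr Suc by simp
      then show ?thesis using l1 by (simp add: algebra_simps)
    qed
    define K2 :: nat where "K2 = nat \<lceil>4 * \<epsilon> * lnn\<rceil>"
    have K2lo: "4 * \<epsilon> * lnn \<le> real K2" unfolding K2_def by linarith
    have K2up: "real K2 \<le> 4 * \<epsilon> * lnn + 1"
    proof -
      have "0 \<le> 4 * \<epsilon> * lnn" using assms l1 by simp
      then show ?thesis unfolding K2_def by linarith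
    qed
    have K2exp: "(3/4)^K2 \<le> exp (- \<epsilon> * lnn)"
    proof -
      have "(3/4::real)^K2 = exp (real K2 * ln (3/4))" by (simp add: exp_of_nat_mult)
      also have "\<dots> \<le> exp (- \<epsilon> * lnn)"
      proof -
        have "ln (3/4::real) \<le> 3/4 - 1" by (rule ln_le_minus_one) simp
        then have "real K2 * ln (3/4) \<le> real K2 * (- 1/4)" by (intro mult_left_mono) auto
        also have "\<dots> \<le> - \<epsilon> * lnn" using K2lo by simp
        finally show ?thesis by simp
      qed
      finally show ?thesis .
    qed
    define T2 :: nat where "T2 = L * n + K2"
    have T2up: "real T2 \<le> C1 * real n * lnn"
    proof -
      have "real T2 = real L * real n + real K2" by (simp add: T2_def)
      also have "\<dots> \<le> (2 * K + 1) * lnn * real n + (4 * \<epsilon> * lnn + 1)"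
        using Lup K2up npos by (intro add_mono mult_right_mono) auto
      also have "\<dots> \<le> (2 * K + 1) * real n * lnn + (4 * \<epsilon> + 1) * real n * lnn"
      proof -
        have "4 * \<epsilon> * lnn + 1 \<le> (4 * \<epsilon> + 1) * lnn" using l1 by (simp add: algebra_simps)
        also have "\<dots> \<le> (4 * \<epsilon> + 1) * real n * lnn"
        proof -
          have "(4 * \<epsilon> + 1) * lnn * 1 \<le> (4 * \<epsilon> + 1) * lnn * real n"
            using assms l1 n4 by (intro mult_left_mono) auto
          then show ?thesis by (simp add: algebra_simps)
        qed
        finally show ?thesis by (simp add: algebra_simps)
      qed
      also have "\<dots> = C1 * real n * lnn" by (simp add: C1_def algebra_simps)
      finally show ?thesis .
    qed
    have T2ge: "1 \<le> T2"
    proof -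
      have "1 \<le> L" by (simp add: L_def)
      then have "1 * n \<le> L * n" by (rule mult_right_mono) simp
      then show ?thesis using n4 unfolding T2_def by linarith
    qed
    have exM: "\<exists>m. T2 < 2^m" by (intro exI[of _ T2]) (rule less_exp)
    define Mb where "Mb = (LEAST m. T2 < 2^m)"
    have TM: "T2 < 2^Mb" unfolding Mb_def by (rule LeastI_ex[OF exM])
    have Mbup: "real Mb \<le> 5 * lnn"
    proof (cases Mb)
      case 0 then show ?thesis using l1 by simp
    next
      case (Suc m)
      have "\<not> T2 < 2^m" using not_less_Least[of m "\<lambda>m. T2 < 2^m"] Suc Mb_def by simp
      then have pm: "(2::real)^m \<le> real T2" by (simp add: not_less)
      have "real m * ln 2 = ln ((2::real)^m)" by (simp add: ln_realpow)
      also have "\<dots> \<le> ln (real T2)" using pm T2ge by (subst ln_le_cancel_iff) auto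
      also have "\<dots> \<le> ln (C1 * real n * real n)"
      proof -
        have "C1 * real n * lnn \<le> C1 * real n * real n" using lnn_n C1 npos by (intro mult_left_mono) auto
        then show ?thesis using T2up T2ge by (subst ln_le_cancel_iff) auto
      qed
      also have "\<dots> = ln C1 + 2 * lnn" using C1 npos by (simp add: ln_mult lnn_def)
      finally have mln: "real m * ln 2 \<le> ln C1 + 2 * lnn" .
      have ln2: "1/2 \<le> ln (2::real)" by (subst ln_ge_iff) (auto simp: exp_half_le2)
      have "real m * (1/2) \<le> real m * ln 2" using ln2 by (intro mult_left_mono) auto
      then have "real m \<le> 2 * ln C1 + 4 * lnn" using mln by linarith
      then show ?thesis using Suc lnn_ge by simp
    qed
    have TR: "2 * real T2 \<le> 2 * C1 * real n * ln (real n)" using T2up by (simp add: lnn_def)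
    have MB: "prob_runtime_le \<epsilon> n (2 * C1 * real n * ln (real n)) \<ge>
        1 - (real T2 * (real n * real Mb * 2 * exp (- (\<epsilon>/3) * ln (real n)) + real n * exp (- \<epsilon> * ln (real n))) + (3/4)^K2)"
      by (rule main_bound[OF n4 ev L_def eps LK T2_def TM TR])
    have E13: "exp (- \<epsilon> * lnn) \<le> exp (- (\<epsilon>/3) * lnn)" using assms l1 by simp
    have FA: "real T2 * (real n * real Mb * 2 * exp (- (\<epsilon>/3) * lnn) + real n * exp (- \<epsilon> * lnn)) + (3/4)^K2
        \<le> (11 * C1 + 1) * ((real n)^2 * exp (- (\<epsilon>/3) * lnn)) * lnn^2"
      by (rule final_arith) (use n4 l1 T2up Mbup E13 K2exp C1 in auto)
    have pw: "real n powr (2 - \<epsilon> / 3) = (real n)^2 * exp (- (\<epsilon>/3) * lnn)"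
    proof -
      have "real n powr (2 - \<epsilon> / 3) = exp ((2 - \<epsilon>/3) * lnn)" using npos by (simp add: powr_def lnn_def)
      also have "\<dots> = exp (2 * lnn) * exp (- (\<epsilon>/3) * lnn)" by (simp add: exp_add[symmetric] algebra_simps)
      also have "exp (2 * lnn) = (real n)^2"
      proof -
        have "exp (2 * lnn) = exp (lnn + lnn)" by simp
        also have "\<dots> = exp lnn * exp lnn" by (rule exp_add)
        also have "exp lnn = real n" using npos by (simp add: lnn_def)
        finally show ?thesis by (simp add: power2_eq_square)
      qed
      finally show ?thesis .
    qed
    show "prob_runtime_le \<epsilon> n (2 * C1 * real n * ln (real n))
             \<ge> 1 - (11 * C1 + 1) * real n powr (2 - \<epsilon> / 3) * (ln (real n))^2"
      using MB FA pw by (simp add: lnn_def mult.assoc)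
  qed
qed


end
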